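(* For every $d,k,N\in\mathbb{N}$ there exists a non-commutative polynomial $q\in\mathbb{R}\langle s_1,\dots,s_N\rangle$ such that $\mathsf{bary}(\mathbf{x})=\mathrm{eval}_q(\mathbf{x})$ for all $\mathbf{x}\in\mathcal{G}_{d,k}^N$.
   Context: $T_{d,k}=\bigoplus_{\ell=0}^k(\mathbb{R}^d)^{\otimes\ell}$ is the truncated tensor algebra (elements $\mathbf{z}=\mathbf{z}^{(0)}\oplus\dots\oplus\mathbf{z}^{(k)}$) with product the bilinear extension of the tensor product of levels, set to $0$ when the total level exceeds $k$. $\mathfrak{g}_{d,k}$ is the smallest Lie subalgebra (commutator bracket) containing $e_1,\dots,e_d\in\mathbb{R}^d$; $\exp(\mathbf{z})=\sum_{\ell=0}^k\mathbf{z}^{\otimes\ell}/\ell!$; $\mathcal{G}_{d,k}=\exp(\mathfrak{g}_{d,k})$ (a group), $\log=\exp^{-1}$, $\log(\mathbf{s})=\sum_{\ell\ge1}\frac{(-1)^{\ell+1}}{\ell}(\mathbf{s}-1)^{\otimes\ell}$. For $\mathbf{x}\in\mathcal{G}_{d,k}^N$, $\mathsf{bary}(\mathbf{x})$ is the unique $\mathbf{m}\in\mathcal{G}_{d,k}$ with $\sum_{i=1}^N\log(\mathbf{m}^{-1}\mathbf{x}_i)=0$. $\mathbb{R}\langle s_1,\dots,s_N\rangle$ denotes the free associative $\mathbb{R}$-algebra on the $Nk$ non-commuting variables $s_i^{(j)}$, $i\in[N]$, $j\in[k]$. For $q$ in it, $\mathrm{eval}_q:T_{d,k}^N\to T_{d,k}$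 is the evaluation obtained by the unital algebra morphism sending $s_i^{(j)}$ to $\mathbf{z}_i^{(j)}$ (the level-$j$ component of the $i$-th argument, viewed in $T_{d,k}$), i.e. substituting $\mathbf{z}_i^{(j)}$ for $s_i^{(j)}$ and computing in $T_{d,k}$. *)

theory Defs
  imports Main "HOL.Real"
begin

text \<open>Truncated tensor algebra T_{d,k}: an element is a function from words
  (lists of letters in {0..<d}) to coefficients; the level-l component is the
  restriction to words of length l; words longer than k carry 0.\<close>

type_synonym tensor = "nat list \<Rightarrow> real"

definition T :: "nat \<Rightarrow> nat \<Rightarrow> tensor set" where
  "T d k = {x. \<forall>w. x w \<noteq> 0 \<longrightarrow> length w \<le> k \<and> set w \<subseteq> {..<d}}"

definition tone :: tensor where
  "tone = (\<lambda>w. if w = [] then 1 else 0)"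

definition tmult :: "nat \<Rightarrow> tensor \<Rightarrow> tensor \<Rightarrow> tensor" where
  "tmult k x y = (\<lambda>w. if length w \<le> k
      then (\<Sum>i\<in>{..length w}. x (take i w) * y (drop i w)) else 0)"

definition tpow :: "nat \<Rightarrow> tensor \<Rightarrow> nat \<Rightarrow> tensor" where
  "tpow k z n = (tmult k z ^^ n) tone"

definition tbracket :: "nat \<Rightarrow> tensor \<Rightarrow> tensor \<Rightarrow> tensor" where
  "tbracket k x y = (\<lambda>w. tmult k x y w - tmult k y x w)"

text \<open>Basis vector e_i of R^d viewed in T_{d,k} (level 1; it is 0 if k = 0).\<close>
definition tbasis :: "nat \<Rightarrow> nat \<Rightarrow> tensor" where
  "tbasis k i = (\<lambda>w. if w = [i] \<and> 1 \<le> k then 1 else 0)"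

inductive_set lie_alg :: "nat \<Rightarrow> nat \<Rightarrow> tensor set" for d k where
  gen: "i < d \<Longrightarrow> tbasis k i \<in> lie_alg d k"
| zero: "(\<lambda>w. 0) \<in> lie_alg d k"
| add: "x \<in> lie_alg d k \<Longrightarrow> y \<in> lie_alg d k \<Longrightarrow> (\<lambda>w. x w + y w) \<in> lie_alg d k"
| smult: "x \<in> lie_alg d k \<Longrightarrow> (\<lambda>w. c * x w) \<in> lie_alg d k"
| bracket: "x \<in> lie_alg d k \<Longrightarrow> y \<in> lie_alg d k \<Longrightarrow> tbracket k x y \<in> lie_alg d k"

definition texp :: "nat \<Rightarrow> tensor \<Rightarrow> tensor" where
  "texp k z = (\<lambda>w. \<Sum>l\<le>k. tpow k z l w / fact l)"

definition tlog :: "nat \<Rightarrow> tensor \<Rightarrow> tensor" where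
  "tlog k s = (\<lambda>w. \<Sum>l\<in>{1..k}. ((-1) ^ (l + 1) / real l) * tpow k (\<lambda>v. s v - tone v) l w)"

definition G :: "nat \<Rightarrow> nat \<Rightarrow> tensor set" where
  "G d k = texp k ` lie_alg d k"

definition tinv :: "nat \<Rightarrow> nat \<Rightarrow> tensor \<Rightarrow> tensor" where
  "tinv d k m = (THE y. y \<in> T d k \<and> tmult k m y = tone \<and> tmult k y m = tone)"

definition bary :: "nat \<Rightarrow> nat \<Rightarrow> nat \<Rightarrow> (nat \<Rightarrow> tensor) \<Rightarrow> tensor" where
  "bary d k N x = (THE m. m \<in> G d k \<and>
     (\<lambda>w. \<Sum>i<N. tlog k (tmult k (tinv d k m) (x i)) w) = (\<lambda>w. 0))"

text \<open>Non-commutative polynomials in R<s_i^(j) : i < N, 1 \<le> j \<le> k>: finitely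
  supported real coefficient functions on words over the variables (i,j).\<close>
definition ncpoly :: "nat \<Rightarrow> nat \<Rightarrow> ((nat \<times> nat) list \<Rightarrow> real) \<Rightarrow> bool" where
  "ncpoly N k q \<longleftrightarrow> finite {w. q w \<noteq> 0} \<and>
     (\<forall>w. q w \<noteq> 0 \<longrightarrow> set w \<subseteq> {..<N} \<times> {1..k})"

definition level :: "nat \<Rightarrow> tensor \<Rightarrow> tensor" where
  "level j z = (\<lambda>w. if length w = j then z w else 0)"

definition monoeval :: "nat \<Rightarrow> (nat \<times> nat) list \<Rightarrow> (nat \<Rightarrow> tensor) \<Rightarrow> tensor" where
  "monoeval k w z = foldr (\<lambda>(i, j) acc. tmult k (level j (z i)) acc) w tone"

definition ncEval :: "nat \<Rightarrow> ((nat \<times> nat) list \<Rightarrow> real) \<Rightarrow> (nat \<Rightarrow> tensor) \<Rightarrow> tensor" where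
  "ncEval k q z = (\<lambda>u. \<Sum>w\<in>{w. q w \<noteq> 0}. q w * monoeval k w z u)"

end

theory Submission
  imports Defs "HOL-Computational_Algebra.Formal_Power_Series"
begin

definition TK :: "nat \<Rightarrow> tensor \<Rightarrow> bool" where
  "TK k x \<longleftrightarrow> (\<forall>w. k < length w \<longrightarrow> x w = 0)"

definition II :: "nat \<Rightarrow> tensor \<Rightarrow> bool" where
  "II n x \<longleftrightarrow> (\<forall>w. length w < n \<longrightarrow> x w = 0)"

lemma tmult_long: "k < length w \<Longrightarrow> tmult k x y w = 0"
  by (simp add: tmult_def)

lemma tmult_TK[simp]: "TK k (tmult k x y)"
  by (simp add: TK_def tmult_def)

lemma tone_TK[simp]: "TK k tone"
  by (simp add: TK_def tone_def)

lemma tmult_add_left: "tmult k (\<lambda>w. x w + x' w) y = (\<lambda>w. tmult k x y w + tmult k x' y w)"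
  by (auto simp: tmult_def algebra_simps sum.distrib)

lemma tmult_add_right: "tmult k x (\<lambda>w. y w + y' w) = (\<lambda>w. tmult k x y w + tmult k x y' w)"
  by (auto simp: tmult_def algebra_simps sum.distrib)

lemma tmult_diff_left: "tmult k (\<lambda>w. x w - x' w) y = (\<lambda>w. tmult k x y w - tmult k x' y w)"
  by (auto simp: tmult_def algebra_simps sum_subtractf)

lemma tmult_diff_right: "tmult k x (\<lambda>w. y w - y' w) = (\<lambda>w. tmult k x y w - tmult k x y' w)"
  by (auto simp: tmult_def algebra_simps sum_subtractf)

lemma tmult_scale_left: "tmult k (\<lambda>w. c * x w) y = (\<lambda>w. c * tmult k x y w)"
  by (auto simp: tmult_def algebra_simps sum_distrib_left)

lemma tmult_scale_right: "tmult k x (\<lambda>w. c * y w) = (\<lambda>w. c * tmult k x y w)"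
  by (auto simp: tmult_def algebra_simps sum_distrib_left)

lemma tmult_zero_left[simp]: "tmult k (\<lambda>w. 0) y = (\<lambda>w. 0)"
  by (auto simp: tmult_def)

lemma tmult_zero_right[simp]: "tmult k x (\<lambda>w. 0) = (\<lambda>w. 0)"
  by (auto simp: tmult_def)

lemma tmult_sum_left: "finite A \<Longrightarrow> tmult k (\<lambda>w. \<Sum>a\<in>A. f a w) y = (\<lambda>w. \<Sum>a\<in>A. tmult k (f a) y w)"
  by (induction A rule: finite_induct) (auto simp: tmult_add_left)

lemma tmult_sum_right: "finite A \<Longrightarrow> tmult k y (\<lambda>w. \<Sum>a\<in>A. f a w) = (\<lambda>w. \<Sum>a\<in>A. tmult k y (f a) w)"
  by (induction A rule: finite_induct) (auto simp: tmult_add_right)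

lemma tmult_tone_left: "TK k x \<Longrightarrow> tmult k tone x = x"
proof
  fix w assume "TK k x"
  show "tmult k tone x w = x w"
  proof (cases "length w \<le> k")
    case True
    have "(\<Sum>i\<le>length w. tone (take i w) * x (drop i w)) = (\<Sum>i\<le>length w. if i = 0 then x w else 0)"
      by (rule sum.cong) (auto simp: tone_def)
    then show ?thesis using True by (simp add: tmult_def)
  next
    case False then show ?thesis using \<open>TK k x\<close> by (simp add: tmult_def TK_def)
  qed
qed

lemma tmult_tone_right: "TK k x \<Longrightarrow> tmult k x tone = x"
proof
  fix w assume "TK k x"
  show "tmult k x tone w = x w"
  proof (cases "length w \<le> k")
    case True
    have "(\<Sum>i\<le>length w. x (take i w) * tone (drop i w)) = (\<Sum>i\<le>length w. if i = length w then x w else 0)"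
      by (rule sum.cong) (auto simp: tone_def)
    then show ?thesis using True by (simp add: tmult_def)
  next
    case False then show ?thesis using \<open>TK k x\<close> by (simp add: tmult_def TK_def)
  qed
qed

lemma tmult_assoc: "tmult k (tmult k x y) z = tmult k x (tmult k y z)"
proof
  fix w
  show "tmult k (tmult k x y) z w = tmult k x (tmult k y z) w"
  proof (cases "length w \<le> k")
    case False then show ?thesis by (simp add: tmult_def)
  next
    case True
    define n where "n = length w"
    define g where "g = (\<lambda>j l. x (take j w) * y (take l (drop j w)) * z (drop (j + l) w))"
    have "tmult k (tmult k x y) z w = (\<Sum>i\<le>n. \<Sum>j\<le>i. g j (i - j))"
    proof -
      have "tmult k (tmult k x y) z w = (\<Sum>i\<le>n. tmult k x y (take i w) * z (drop i w))"
        using True by (simp add: tmult_def n_def)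
      also have "\<dots> = (\<Sum>i\<le>n. \<Sum>j\<le>i. g j (i - j))"
      proof (rule sum.cong[OF refl])
        fix i assume i: "i \<in> {..n}"
        have "tmult k x y (take i w) = (\<Sum>j\<le>i. x (take j w) * y (take (i - j) (drop j w)))"
          using True i by (auto simp: tmult_def n_def min_def take_drop intro!: sum.cong)
        then show "tmult k x y (take i w) * z (drop i w) = (\<Sum>j\<le>i. g j (i - j))"
          using i by (auto simp: g_def sum_distrib_right intro!: sum.cong)
      qed
      finally show ?thesis .
    qed
    also have "\<dots> = (\<Sum>(j,l)\<in>{(j,l). j + l \<le> n}. g j l)"
      by (rule sum.triangle_reindex_eq[symmetric])
    also have "\<dots> = (\<Sum>j\<le>n. \<Sum>l\<le>n - j. g j l)"
    proof -
      have "{(j,l). j + l \<le> n} = Sigma {..n} (\<lambda>j. {..n - j})" by auto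
      then show ?thesis by (simp add: sum.Sigma)
    qed
    also have "\<dots> = tmult k x (tmult k y z) w"
    proof -
      have "tmult k x (tmult k y z) w = (\<Sum>j\<le>n. x (take j w) * tmult k y z (drop j w))"
        using True by (simp add: tmult_def n_def)
      also have "\<dots> = (\<Sum>j\<le>n. \<Sum>l\<le>n - j. g j l)"
      proof (rule sum.cong[OF refl])
        fix j assume j: "j \<in> {..n}"
        have "tmult k y z (drop j w) = (\<Sum>l\<le>n - j. y (take l (drop j w)) * z (drop (j + l) w))"
          using True j by (auto simp: tmult_def n_def add.commute)
        then show "x (take j w) * tmult k y z (drop j w) = (\<Sum>l\<le>n - j. g j l)"
          by (simp add: g_def sum_distrib_left mult.assoc)
      qed
      finally show ?thesis by simp
    qed
    finally show ?thesis .
  qed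
qed

lemma II_0[simp]: "II 0 x" by (simp add: II_def)
lemma II_mono: "II n x \<Longrightarrow> m \<le> n \<Longrightarrow> II m x" by (auto simp: II_def)
lemma II_add: "II n x \<Longrightarrow> II n y \<Longrightarrow> II n (\<lambda>w. x w + y w)" by (auto simp: II_def)
lemma II_diff: "II n x \<Longrightarrow> II n y \<Longrightarrow> II n (\<lambda>w. x w - y w)" by (auto simp: II_def)
lemma II_scale: "II n x \<Longrightarrow> II n (\<lambda>w. c * x w)" by (auto simp: II_def)
lemma II_zero[simp]: "II n (\<lambda>w. 0)" by (auto simp: II_def)
lemma II_sum: "(\<And>a. a \<in> A \<Longrightarrow> II n (f a)) \<Longrightarrow> II n (\<lambda>w. \<Sum>a\<in>A. f a w)"
  by (auto simp: II_def intro!: sum.neutral)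

lemma tmult_II: assumes "II a x" "II b y" shows "II (a + b) (tmult k x y)"
  unfolding II_def
proof (intro allI impI)
  fix w :: "nat list" assume w: "length w < a + b"
  have "\<And>i. i \<le> length w \<Longrightarrow> x (take i w) * y (drop i w) = 0"
  proof -
    fix i assume "i \<le> length w"
    show "x (take i w) * y (drop i w) = 0"
    proof (cases "i < a")
      case True then show ?thesis using assms(1) \<open>i \<le> length w\<close> by (simp add: II_def)
    next
      case False then have "length (drop i w) < b" using w False \<open>i \<le> length w\<close> by auto
      then show ?thesis using assms(2) by (simp add: II_def)
    qed
  qed
  then show "tmult k x y w = 0" unfolding tmult_def by (auto intro!: sum.neutral)
qed

lemma II_TK_zero: "II (Suc k) x \<Longrightarrow> TK k x \<Longrightarrow> x = (\<lambda>w. 0)"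
  by (auto simp: II_def TK_def) (metis not_less_eq)

lemma TK_add: "TK k x \<Longrightarrow> TK k y \<Longrightarrow> TK k (\<lambda>w. x w + y w)" by (auto simp: TK_def)
lemma TK_diff: "TK k x \<Longrightarrow> TK k y \<Longrightarrow> TK k (\<lambda>w. x w - y w)" by (auto simp: TK_def)
lemma TK_scale: "TK k x \<Longrightarrow> TK k (\<lambda>w. c * x w)" by (auto simp: TK_def)
lemma TK_zero[simp]: "TK k (\<lambda>w. 0)" by (auto simp: TK_def)
lemma TK_sum: "(\<And>a. a \<in> A \<Longrightarrow> TK k (f a)) \<Longrightarrow> TK k (\<lambda>w. \<Sum>a\<in>A. f a w)"
  by (auto simp: TK_def intro!: sum.neutral)

lemma tmult_cong_II:
  assumes "II n (\<lambda>w. x w - x' w)" "II n (\<lambda>w. y w - y' w)"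
  shows "II n (\<lambda>w. tmult k x y w - tmult k x' y' w)"
proof -
  have e: "(\<lambda>w. tmult k x y w - tmult k x' y' w) =
     (\<lambda>w. tmult k (\<lambda>w. x w - x' w) y w + tmult k x' (\<lambda>w. y w - y' w) w)"
    by (simp add: tmult_diff_left tmult_diff_right)
  have "II (n + 0) (tmult k (\<lambda>w. x w - x' w) y)" by (rule tmult_II[OF assms(1)]) simp
  moreover have "II (0 + n) (tmult k x' (\<lambda>w. y w - y' w))" by (rule tmult_II[OF _ assms(2)]) simp
  ultimately show ?thesis unfolding e by (intro II_add) auto
qed

lemma tmult_II_left: "II n x \<Longrightarrow> II n (tmult k x y)"
  using tmult_II[of n x 0 y k] by simp
lemma tmult_II_right: "II n y \<Longrightarrow> II n (tmult k x y)"
  using tmult_II[of 0 x n y k] by simp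

lemma tpow_0[simp]: "tpow k z 0 = tone" by (simp add: tpow_def)
lemma tpow_Suc: "tpow k z (Suc n) = tmult k z (tpow k z n)" by (simp add: tpow_def)
lemma tpow_TK[simp]: "TK k (tpow k z n)" by (cases n) (simp_all add: tpow_Suc)

lemma tpow_add: "tpow k z (m + n) = tmult k (tpow k z m) (tpow k z n)"
  by (induction m) (simp_all add: tpow_Suc tmult_tone_left tmult_assoc)

lemma tpow_1: "TK k z \<Longrightarrow> tpow k z (Suc 0) = z"
  by (simp add: tpow_Suc tmult_tone_right)

lemma tpow_Suc': "TK k z \<Longrightarrow> tpow k z (Suc n) = tmult k (tpow k z n) z"
  using tpow_add[of k z n 1] by (simp add: tpow_1)

lemma tpow_II: "II 1 z \<Longrightarrow> II n (tpow k z n)"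
proof (induction n)
  case 0 then show ?case by simp
next
  case (Suc n)
  then have "II (1 + n) (tmult k z (tpow k z n))" by (intro tmult_II) auto
  then show ?case by (simp add: tpow_Suc)
qed

lemma tpow_big: "II 1 z \<Longrightarrow> k < n \<Longrightarrow> tpow k z n = (\<lambda>w. 0)"
  by (rule II_TK_zero[of k]) (auto intro: II_mono[OF tpow_II])

lemma tpow_cong_II: "II n (\<lambda>w. x w - x' w) \<Longrightarrow> II n (\<lambda>w. tpow k x l w - tpow k x' l w)"
  by (induction l) (simp_all add: tpow_Suc tmult_cong_II)

lemma tpow_0_word: "II 1 z \<Longrightarrow> tpow k z (Suc n) [] = 0"
  using tpow_II[of z "Suc n" k] by (simp add: II_def)

definition tinvk :: "nat \<Rightarrow> tensor \<Rightarrow> tensor" where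
  "tinvk k z = (\<lambda>w. \<Sum>l\<le>k. tpow k (\<lambda>v. tone v - z v) l w)"

lemma tinvk_TK[simp]: "TK k (tinvk k z)"
  unfolding tinvk_def by (rule TK_sum) simp

lemma one_minus_II: "z [] = 1 \<Longrightarrow> II 1 (\<lambda>v. tone v - z v)"
  by (auto simp: II_def tone_def)

lemma tinvk_inv:
  assumes "TK k z" "z [] = 1"
  shows "tmult k z (tinvk k z) = tone" "tmult k (tinvk k z) z = tone"
proof -
  define b where "b = (\<lambda>v. tone v - z v)"
  have bII: "II 1 b" unfolding b_def by (rule one_minus_II[of z]) (rule assms(2))
  have bTK: "TK k b" using assms by (simp add: b_def TK_diff)
  have z: "z = (\<lambda>w. tone w - b w)" by (simp add: b_def)
  have big: "tpow k b (Suc k) = (\<lambda>w. 0)" using bII by (rule tpow_big) simp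
  have S: "tinvk k z = (\<lambda>w. \<Sum>l\<le>k. tpow k b l w)" by (simp add: tinvk_def b_def)
  have "tmult k z (tinvk k z) = (\<lambda>w. (\<Sum>l\<le>k. tpow k b l w) - (\<Sum>l\<le>k. tpow k b (Suc l) w))"
    apply (subst z, subst S)
    apply (simp add: tmult_diff_left tmult_tone_left TK_sum tmult_sum_left tmult_sum_right tpow_Suc)
    done
  also have "\<dots> = tone"
    using sum_telescope[of "\<lambda>l. tpow k b l _" k] big by (simp add: sum_subtractf[symmetric])
  finally show "tmult k z (tinvk k z) = tone" .
  have "tmult k (tinvk k z) z = (\<lambda>w. (\<Sum>l\<le>k. tpow k b l w) - (\<Sum>l\<le>k. tpow k b (Suc l) w))"
    apply (subst z, subst S)
    apply (simp add: tmult_diff_right tmult_tone_right TK_sum tmult_sum_left tpow_Suc'[OF bTK])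
    done
  also have "\<dots> = tone"
    using sum_telescope[of "\<lambda>l. tpow k b l _" k] big by (simp add: sum_subtractf[symmetric])
  finally show "tmult k (tinvk k z) z = tone" .
qed

lemma inv_unique:
  assumes "TK k y" "TK k s" "tmult k z s = tone" "tmult k y z = tone"
  shows "y = s"
proof -
  have "y = tmult k y tone" using assms by (simp add: tmult_tone_right)
  also have "\<dots> = tmult k y (tmult k z s)" using assms by simp
  also have "\<dots> = tmult k (tmult k y z) s" by (simp add: tmult_assoc)
  also have "\<dots> = s" using assms by (simp add: tmult_tone_left)
  finally show ?thesis .
qed

lemma T_TK: "x \<in> T d k \<Longrightarrow> TK k x"
  by (auto simp: T_def TK_def)

lemma T_mem2: "x \<in> T d k \<Longrightarrow> y \<in> T d k \<Longrightarrow> (\<And>w. f w \<noteq> 0 \<Longrightarrow> x w \<noteq> 0 \<or> y w \<noteq> 0) \<Longrightarrow> f \<in> T d k"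
  unfolding T_def by blast

lemma T_add: "x \<in> T d k \<Longrightarrow> y \<in> T d k \<Longrightarrow> (\<lambda>w. x w + y w) \<in> T d k"
  by (erule T_mem2, assumption) auto
lemma T_diff: "x \<in> T d k \<Longrightarrow> y \<in> T d k \<Longrightarrow> (\<lambda>w. x w - y w) \<in> T d k"
  by (erule T_mem2, assumption) auto
lemma T_scale: "x \<in> T d k \<Longrightarrow> (\<lambda>w. c * x w) \<in> T d k"
  by (rule T_mem2[of x d k x]) auto
lemma T_zero[simp]: "(\<lambda>w. 0) \<in> T d k" by (auto simp: T_def)
lemma T_tone[simp]: "tone \<in> T d k" by (auto simp: T_def tone_def)

lemma T_tmult: assumes "x \<in> T d k" "y \<in> T d k" shows "tmult k x y \<in> T d k"
  unfolding T_def
proof (intro CollectI allI impI)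
  fix w assume nz: "tmult k x y w \<noteq> 0"
  then have len: "length w \<le> k" by (auto simp: tmult_def split: if_splits)
  then have "(\<Sum>i\<le>length w. x (take i w) * y (drop i w)) \<noteq> 0" using nz by (simp add: tmult_def)
  then obtain i where i: "i \<le> length w" "x (take i w) * y (drop i w) \<noteq> 0"
    by (meson sum.not_neutral_contains_not_neutral atMost_iff)
  then have "set (take i w) \<subseteq> {..<d}" "set (drop i w) \<subseteq> {..<d}"
    using assms by (auto simp: T_def)
  then have "set w \<subseteq> {..<d}"
    by (metis Un_subset_iff append_take_drop_id set_append)
  then show "length w \<le> k \<and> set w \<subseteq> {..<d}" using len by simp
qed

lemma T_sum: "(\<And>a. a \<in> A \<Longrightarrow> f a \<in> T d k) \<Longrightarrow> (\<lambda>w. \<Sum>a\<in>A. f a w) \<in> T d k"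
proof (induction A rule: infinite_finite_induct)
  case (insert a A) then show ?case by (simp add: T_add)
qed auto
lemma T_tpow: "z \<in> T d k \<Longrightarrow> tpow k z n \<in> T d k"
  by (induction n) (simp_all add: tpow_Suc T_tmult)
lemma T_tinvk: "z \<in> T d k \<Longrightarrow> tinvk k z \<in> T d k"
  unfolding tinvk_def by (intro T_sum T_tpow T_diff) auto
lemma T_texp: "z \<in> T d k \<Longrightarrow> texp k z \<in> T d k"
  unfolding texp_def divide_inverse by (subst mult.commute) (intro T_sum T_scale T_tpow)
lemma T_tlog: "z \<in> T d k \<Longrightarrow> tlog k z \<in> T d k"
  unfolding tlog_def by (intro T_sum T_scale T_tpow T_diff) auto
lemma T_tbasis: "i < d \<Longrightarrow> tbasis k i \<in> T d k"
  by (auto simp: T_def tbasis_def)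
lemma T_lie: "x \<in> lie_alg d k \<Longrightarrow> x \<in> T d k"
  by (induction rule: lie_alg.induct) (auto simp: T_tbasis T_add T_scale tbracket_def T_diff T_tmult)

lemma tinv_eq:
  assumes "z \<in> T d k" "z [] = 1"
  shows "tinv d k z = tinvk k z"
  unfolding tinv_def
proof (rule the_equality)
  show "tinvk k z \<in> T d k \<and> tmult k z (tinvk k z) = tone \<and> tmult k (tinvk k z) z = tone"
    using assms T_TK tinvk_inv T_tinvk by blast
next
  fix y assume "y \<in> T d k \<and> tmult k z y = tone \<and> tmult k y z = tone"
  then show "y = tinvk k z"
    using inv_unique[of k y "tinvk k z" z] assms T_TK tinvk_inv by auto
qed

fun shuf :: "nat list \<Rightarrow> nat list \<Rightarrow> nat list list" where
  "shuf [] v = [v]"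
| "shuf (a#u) [] = [a#u]"
| "shuf (a#u) (b#v) = map (Cons a) (shuf u (b#v)) @ map (Cons b) (shuf (a#u) v)"

definition sh :: "tensor \<Rightarrow> nat list \<Rightarrow> nat list \<Rightarrow> real" where
  "sh f u v = (\<Sum>w\<leftarrow>shuf u v. f w)"

definition ld :: "nat \<Rightarrow> tensor \<Rightarrow> tensor" where
  "ld a x = (\<lambda>w. x (a # w))"

lemma ld_apply[simp]: "ld a x w = x (a # w)" by (simp add: ld_def)

lemma sh_Nil1[simp]: "sh f [] v = f v" by (simp add: sh_def)
lemma sh_Nil2[simp]: "sh f u [] = f u" by (cases u) (simp_all add: sh_def)
lemma sh_Cons: "sh f (a#u) (b#v) = sh (ld a f) u (b#v) + sh (ld b f) (a#u) v"
  by (simp add: sh_def o_def ld_def)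

lemma shuf_length: "w \<in> set (shuf u v) \<Longrightarrow> length w = length u + length v"
  by (induction u v arbitrary: w rule: shuf.induct) auto

lemma sh_add: "sh (\<lambda>w. f w + g w) u v = sh f u v + sh g u v"
  by (simp add: sh_def sum_list_addf)
lemma sh_diff: "sh (\<lambda>w. f w - g w) u v = sh f u v - sh g u v"
  by (simp add: sh_def sum_list_subtractf)
lemma sh_scale: "sh (\<lambda>w. c * f w) u v = c * sh f u v"
  by (simp add: sh_def sum_list_const_mult)
lemma sh_sum: "sh (\<lambda>w. \<Sum>a\<in>A. f a w) u v = (\<Sum>a\<in>A. sh (f a) u v)"
  by (induction A rule: infinite_finite_induct) (simp_all add: sh_add sh_def)
lemma sh_zero[simp]: "sh (\<lambda>w. 0) u v = 0"
  by (simp add: sh_def)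
lemma sh_cong: "(\<And>w. length w = length u + length v \<Longrightarrow> f w = g w) \<Longrightarrow> sh f u v = sh g u v"
  unfolding sh_def by (rule arg_cong[where f=sum_list], rule map_cong) (auto dest: shuf_length)

lemma sh_L0: "sh f p q = (if p = [] \<and> q = [] then f [] else 0)
   + (if p \<noteq> [] then sh (ld (hd p) f) (tl p) q else 0)
   + (if q \<noteq> [] then sh (ld (hd q) f) p (tl q) else 0)"
  by (cases p; cases q) (simp_all add: sh_Cons ld_def)

lemma sh_right: "sh f (u @ [a]) (v @ [b]) = sh (\<lambda>w. f (w @ [a])) u (v @ [b]) + sh (\<lambda>w. f (w @ [b])) (u @ [a]) v"
proof (induction "length u + length v" arbitrary: u v f rule: less_induct)
  case less
  show ?case
  proof (cases u)
    case Nil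
    show ?thesis
    proof (cases v)
      case Nil
      then show ?thesis using \<open>u = []\<close> by (simp add: sh_Cons)
    next
      case (Cons y v')
      have IH: "sh (ld y f) [a] (v' @ [b]) = sh (\<lambda>w. ld y f (w @ [a])) [] (v' @ [b]) + sh (\<lambda>w. ld y f (w @ [b])) ([] @ [a]) v'"
        using less[of "[]" v' "ld y f"] Cons by simp
      show ?thesis using Nil Cons IH by (simp add: sh_Cons ld_def)
    qed
  next
    case (Cons x u')
    show ?thesis
    proof (cases v)
      case Nil
      have IH: "sh (ld x f) (u' @ [a]) ([] @ [b]) = sh (\<lambda>w. ld x f (w @ [a])) u' ([] @ [b]) + sh (\<lambda>w. ld x f (w @ [b])) (u' @ [a]) []"
        using less[of u' "[]" "ld x f"] Cons by simp
      show ?thesis using Nil Cons IH by (simp add: sh_Cons ld_def)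
    next
      case (Cons y v')
      have IH1: "sh (ld x f) (u' @ [a]) (v @ [b]) = sh (\<lambda>w. ld x f (w @ [a])) u' (v @ [b]) + sh (\<lambda>w. ld x f (w @ [b])) (u' @ [a]) v"
        using less[of u' v "ld x f"] \<open>u = x # u'\<close> by simp
      have IH2: "sh (ld y f) (u @ [a]) (v' @ [b]) = sh (\<lambda>w. ld y f (w @ [a])) u (v' @ [b]) + sh (\<lambda>w. ld y f (w @ [b])) (u @ [a]) v'"
        using less[of u v' "ld y f"] Cons by simp
      show ?thesis using Cons \<open>u = x # u'\<close> IH1 IH2 by (simp add: sh_Cons ld_def)
    qed
  qed
qed

lemma tmult_Cons: "length w < k \<Longrightarrow> tmult k x y (a # w) = x [] * y (a # w) + tmult k (ld a x) y w"
  by (simp add: tmult_def sum.atMost_Suc_shift del: sum.atMost_Suc)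

lemma sum_atMost_Suc_if: "(\<Sum>i\<le>Suc n. if i = 0 then 0 else g (i - 1)) = (\<Sum>i\<le>n. g i :: real)"
  by (simp add: sum.atMost_Suc_shift del: sum.atMost_Suc)

lemma sum_delta00: "(\<Sum>i\<le>(n::nat). \<Sum>j\<le>(m::nat). if i = 0 \<and> j = 0 then c else 0) = (c::real)"
proof -
  have "(\<Sum>i\<le>n. \<Sum>j\<le>m. if i = 0 \<and> j = 0 then c else 0) = (\<Sum>i\<le>n. if i = 0 then (\<Sum>j\<le>m. if j = 0 then c else 0) else 0)"
    by (rule sum.cong) auto
  also have "\<dots> = c" by (simp add: sum.delta[OF finite_atMost])
  finally show ?thesis .
qed

lemma S1: "length u + length v \<le> k \<Longrightarrow>
  sh (tmult k x y) u v = (\<Sum>i\<le>length u. \<Sum>j\<le>length v. sh x (take i u) (take j v) * sh y (drop i u) (drop j v))"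
proof (induction "length u + length v" arbitrary: u v x rule: less_induct)
  case less
  show ?case
  proof (cases "u = [] \<or> v = []")
    case True
    then show ?thesis using less.prems by (auto simp: tmult_def)
  next
    case False
    then obtain a u' b v' where u: "u = a # u'" and v: "v = b # v'" by (meson neq_Nil_conv)
    define Y where "Y = (\<lambda>i j. sh y (drop i u) (drop j v))"
    have IHa: "sh (tmult k (ld a x) y) u' v = (\<Sum>i\<le>length u'. \<Sum>j\<le>length v. sh (ld a x) (take i u') (take j v) * sh y (drop i u') (drop j v))"
      using less.hyps[of u' v "ld a x"] less.prems u by simp
    have IHb: "sh (tmult k (ld b x) y) u v' = (\<Sum>i\<le>length u. \<Sum>j\<le>length v'. sh (ld b x) (take i u) (take j v') * sh y (drop i u) (drop j v'))"
      using less.hyps[of u v' "ld b x"] less.prems v by simp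
    have La: "sh (ld a (tmult k x y)) u' v = x [] * sh (ld a y) u' v + sh (tmult k (ld a x) y) u' v"
    proof -
      have "sh (ld a (tmult k x y)) u' v = sh (\<lambda>w. x [] * ld a y w + tmult k (ld a x) y w) u' v"
        by (rule sh_cong) (use less.prems u in \<open>simp add: tmult_Cons\<close>)
      then show ?thesis by (simp add: sh_add sh_scale ld_def)
    qed
    have Lb: "sh (ld b (tmult k x y)) u v' = x [] * sh (ld b y) u v' + sh (tmult k (ld b x) y) u v'"
    proof -
      have "sh (ld b (tmult k x y)) u v' = sh (\<lambda>w. x [] * ld b y w + tmult k (ld b x) y w) u v'"
        by (rule sh_cong) (use less.prems v in \<open>simp add: tmult_Cons\<close>)
      then show ?thesis by (simp add: sh_add sh_scale ld_def)
    qed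
    have LHS: "sh (tmult k x y) u v = x [] * Y 0 0 + sh (tmult k (ld a x) y) u' v + sh (tmult k (ld b x) y) u v'"
      using La Lb u v by (simp add: sh_Cons Y_def algebra_simps)
    have split: "\<And>i j. sh x (take i u) (take j v) * Y i j =
        (if i = 0 \<and> j = 0 then x [] * Y 0 0 else 0)
      + (if i = 0 then 0 else sh (ld a x) (take (i - 1) u') (take j v) * Y i j)
      + (if j = 0 then 0 else sh (ld b x) (take i u) (take (j - 1) v') * Y i j)"
    proof -
      fix i j
      show "?thesis i j"
        using sh_L0[of x "take i u" "take j v"] u v
        by (cases i; cases j) (simp_all add: algebra_simps)
    qed
    have "(\<Sum>i\<le>length u. \<Sum>j\<le>length v. sh x (take i u) (take j v) * Y i j)
      = (\<Sum>i\<le>length u. \<Sum>j\<le>length v. (if i = 0 \<and> j = 0 then x [] * Y 0 0 else 0))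
      + (\<Sum>i\<le>length u. \<Sum>j\<le>length v. (if i = 0 then 0 else sh (ld a x) (take (i - 1) u') (take j v) * Y i j))
      + (\<Sum>i\<le>length u. \<Sum>j\<le>length v. (if j = 0 then 0 else sh (ld b x) (take i u) (take (j - 1) v') * Y i j))"
      by (simp only: split sum.distrib)
    also have "(\<Sum>i\<le>length u. \<Sum>j\<le>length v. (if i = 0 \<and> j = 0 then x [] * Y 0 0 else 0)) = x [] * Y 0 0"
      by (rule sum_delta00)
    also have "(\<Sum>i\<le>length u. \<Sum>j\<le>length v. (if i = 0 then 0 else sh (ld a x) (take (i - 1) u') (take j v) * Y i j))
       = sh (tmult k (ld a x) y) u' v"
    proof -
      have "(\<Sum>i\<le>length u. \<Sum>j\<le>length v. (if i = 0 then 0 else sh (ld a x) (take (i - 1) u') (take j v) * Y i j))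
         = (\<Sum>i\<le>Suc (length u'). if i = 0 then 0 else (\<lambda>i. \<Sum>j\<le>length v. sh (ld a x) (take i u') (take j v) * Y (Suc i) j) (i - 1))"
        using u by (intro sum.cong) auto
      also have "\<dots> = (\<Sum>i\<le>length u'. \<Sum>j\<le>length v. sh (ld a x) (take i u') (take j v) * Y (Suc i) j)"
        by (rule sum_atMost_Suc_if)
      finally show ?thesis using IHa u by (simp add: Y_def)
    qed
    also have "(\<Sum>i\<le>length u. \<Sum>j\<le>length v. (if j = 0 then 0 else sh (ld b x) (take i u) (take (j - 1) v') * Y i j))
       = sh (tmult k (ld b x) y) u v'"
    proof -
      have "\<And>i. (\<Sum>j\<le>length v. (if j = 0 then 0 else sh (ld b x) (take i u) (take (j - 1) v') * Y i j))
         = (\<Sum>j\<le>Suc (length v'). if j = 0 then 0 else (\<lambda>j. sh (ld b x) (take i u) (take j v') * Y i (Suc j)) (j - 1))"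
        using v by (intro sum.cong) auto
      also have "\<And>i. (\<Sum>j\<le>Suc (length v'). if j = 0 then 0 else (\<lambda>j. sh (ld b x) (take i u) (take j v') * Y i (Suc j)) (j - 1))
          = (\<Sum>j\<le>length v'. sh (ld b x) (take i u) (take j v') * Y i (Suc j))"
        by (rule sum_atMost_Suc_if)
      finally show ?thesis using IHb v by (simp add: Y_def)
    qed
    finally show ?thesis using LHS by (simp add: Y_def ld_def)
  qed
qed

definition GL :: "nat \<Rightarrow> nat \<Rightarrow> tensor \<Rightarrow> bool" where
  "GL d k y \<longleftrightarrow> y \<in> T d k \<and> y [] = 1 \<and> (\<forall>u v. length u + length v \<le> k \<longrightarrow> sh y u v = y u * y v)"

definition PR :: "nat \<Rightarrow> nat \<Rightarrow> tensor \<Rightarrow> bool" where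
  "PR d k a \<longleftrightarrow> a \<in> T d k \<and> a [] = 0 \<and> (\<forall>u v. u \<noteq> [] \<longrightarrow> v \<noteq> [] \<longrightarrow> length u + length v \<le> k \<longrightarrow> sh a u v = 0)"

lemma GL_mult:
  assumes "GL d k y" "GL d k z"
  shows "GL d k (tmult k y z)"
proof -
  have T: "tmult k y z \<in> T d k" using assms by (simp add: GL_def T_tmult)
  have e: "tmult k y z [] = 1" using assms by (simp add: GL_def tmult_def)
  have "sh (tmult k y z) u v = tmult k y z u * tmult k y z v" if l: "length u + length v \<le> k" for u v
  proof -
    have "sh (tmult k y z) u v = (\<Sum>i\<le>length u. \<Sum>j\<le>length v. (y (take i u) * z (drop i u)) * (y (take j v) * z (drop j v)))"
      unfolding S1[OF l]
    proof (intro sum.cong refl)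
      fix i j assume "i \<in> {..length u}" "j \<in> {..length v}"
      have "length (take i u) + length (take j v) \<le> k" "length (drop i u) + length (drop j v) \<le> k"
        using l by auto
      then show "sh y (take i u) (take j v) * sh z (drop i u) (drop j v) = (y (take i u) * z (drop i u)) * (y (take j v) * z (drop j v))"
        using assms by (simp add: GL_def)
    qed
    also have "\<dots> = (\<Sum>i\<le>length u. y (take i u) * z (drop i u)) * (\<Sum>j\<le>length v. y (take j v) * z (drop j v))"
      by (simp add: sum_product)
    also have "\<dots> = tmult k y z u * tmult k y z v"
      using l by (simp add: tmult_def)
    finally show ?thesis .
  qed
  then show ?thesis using T e by (simp add: GL_def)
qed

lemma sh_prim:
  assumes "PR d k a" "length p + length q \<le> k"
  shows "sh a p q = (if p = [] then a q else if q = [] then a p else 0)"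
  using assms by (auto simp: PR_def)

lemma sum_if00: "(\<Sum>i\<le>(n::nat). \<Sum>j\<le>(m::nat). if i = 0 then A j else if j = 0 then B i else 0)
   = (\<Sum>j\<le>m. A j) + (\<Sum>i\<le>n. B i) - (B 0 :: real)"
proof -
  have "(\<Sum>i\<le>n. \<Sum>j\<le>m. if i = 0 then A j else if j = 0 then B i else 0)
      = (\<Sum>i\<le>n. if i = 0 then (\<Sum>j\<le>m. A j) else B i)"
    by (rule sum.cong) (auto simp: sum.delta[OF finite_atMost] cong: if_cong)
  also have "\<dots> = (\<Sum>j\<le>m. A j) + (\<Sum>i\<le>n. B i) - B 0"
    by (simp add: sum.atMost_shift)
  finally show ?thesis .
qed

lemma sh_prim_mult:
  assumes "PR d k a" "length u + length v \<le> k"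
  shows "sh (tmult k a b) u v = (\<Sum>j\<le>length v. a (take j v) * sh b u (drop j v)) + (\<Sum>i\<le>length u. a (take i u) * sh b (drop i u) v)"
proof -
  have a0: "a [] = 0" using assms by (simp add: PR_def)
  have "sh (tmult k a b) u v = (\<Sum>i\<le>length u. \<Sum>j\<le>length v.
      if i = 0 then a (take j v) * sh b u (drop j v) else if j = 0 then a (take i u) * sh b (drop i u) v else 0)"
    unfolding S1[OF assms(2)]
  proof (intro sum.cong refl)
    fix i j assume ij: "i \<in> {..length u}" "j \<in> {..length v}"
    have "length (take i u) + length (take j v) \<le> k" using assms by auto
    then show "sh a (take i u) (take j v) * sh b (drop i u) (drop j v) = (if i = 0 then a (take j v) * sh b u (drop j v) else if j = 0 then a (take i u) * sh b (drop i u) v else 0)"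
      using sh_prim[OF assms(1)] ij a0 by auto
  qed
  also have "\<dots> = (\<Sum>j\<le>length v. a (take j v) * sh b u (drop j v)) + (\<Sum>i\<le>length u. a (take i u) * sh b (drop i u) v) - a [] * sh b u v"
    by (rule sum_if00[where B = "\<lambda>i. a (take i u) * sh b (drop i u) v", simplified])
  finally show ?thesis using a0 by simp
qed

lemma PR_bracket:
  assumes "PR d k a" "PR d k b"
  shows "PR d k (tbracket k a b)"
proof -
  have key: "sh (tmult k x y) u v = x v * y u + x u * y v"
    if "PR d k x" "PR d k y" "u \<noteq> []" "v \<noteq> []" "length u + length v \<le> k" for x y u v
  proof -
    have s1: "(\<Sum>j\<le>length v. x (take j v) * sh y u (drop j v)) = x v * y u"
    proof -
      have "(\<Sum>j\<le>length v. x (take j v) * sh y u (drop j v)) = (\<Sum>j\<le>length v. if j = length v then x v * y u else 0)"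
        by (rule sum.cong) (use that in \<open>auto simp: sh_prim[OF that(2)]\<close>)
      then show ?thesis by simp
    qed
    have s2: "(\<Sum>i\<le>length u. x (take i u) * sh y (drop i u) v) = x u * y v"
    proof -
      have "(\<Sum>i\<le>length u. x (take i u) * sh y (drop i u) v) = (\<Sum>i\<le>length u. if i = length u then x u * y v else 0)"
        by (rule sum.cong) (use that in \<open>auto simp: sh_prim[OF that(2)]\<close>)
      then show ?thesis by simp
    qed
    show ?thesis using sh_prim_mult[OF that(1) that(5)] s1 s2 by simp
  qed
  have T: "tbracket k a b \<in> T d k" using assms by (simp add: PR_def tbracket_def T_diff T_tmult)
  have e: "tbracket k a b [] = 0" using assms by (simp add: PR_def tbracket_def tmult_def)
  show ?thesis unfolding PR_def
    using T e key[OF assms] key[OF assms(2,1)] by (simp add: tbracket_def sh_diff)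
qed

lemma PR_add: "PR d k a \<Longrightarrow> PR d k b \<Longrightarrow> PR d k (\<lambda>w. a w + b w)"
  by (simp add: PR_def T_add sh_add)
lemma PR_diff: "PR d k a \<Longrightarrow> PR d k b \<Longrightarrow> PR d k (\<lambda>w. a w - b w)"
  by (simp add: PR_def T_diff sh_diff)
lemma PR_scale: "PR d k a \<Longrightarrow> PR d k (\<lambda>w. c * a w)"
  by (simp add: PR_def T_scale sh_scale)
lemma PR_zero: "PR d k (\<lambda>w. 0)"
  by (simp add: PR_def)
lemma PR_sum: "(\<And>i. i \<in> A \<Longrightarrow> PR d k (f i)) \<Longrightarrow> PR d k (\<lambda>w. \<Sum>i\<in>A. f i w)"
proof (induction A rule: infinite_finite_induct)
  case (infinite A) then show ?case by (simp add: PR_zero)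
next
  case empty then show ?case by (simp add: PR_zero)
next
  case (insert x F) then show ?case by (simp add: PR_add)
qed
lemma PR_tbasis: "i < d \<Longrightarrow> PR d k (tbasis k i)"
proof -
  assume "i < d"
  have "sh (tbasis k i) u v = 0" if "u \<noteq> []" "v \<noteq> []" for u v
  proof -
    have "length u \<ge> 1" "length v \<ge> 1" using that by (auto simp: Suc_le_eq)
    then have "sh (tbasis k i) u v = sh (\<lambda>w. 0) u v"
      by (intro sh_cong) (auto simp: tbasis_def)
    then show ?thesis by simp
  qed
  moreover have "tbasis k i \<in> T d k" using \<open>i < d\<close> by (rule T_tbasis)
  ultimately show ?thesis by (simp add: PR_def tbasis_def)
qed

lemma lie_PR: "x \<in> lie_alg d k \<Longrightarrow> PR d k x"
  by (induction rule: lie_alg.induct) (auto simp: PR_tbasis PR_zero PR_add PR_scale PR_bracket)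

lemma PR_II: "PR d k a \<Longrightarrow> II 1 a"
  by (auto simp: PR_def II_def)

lemma PR_TK: "PR d k a \<Longrightarrow> TK k a"
  by (auto simp: PR_def T_TK)

lemma sh_tone: "sh tone u v = tone u * tone v"
proof (cases "u = [] \<and> v = []")
  case True then show ?thesis by (simp add: tone_def)
next
  case False
  then have "sh tone u v = sh (\<lambda>w. 0) u v"
    by (intro sh_cong) (auto simp: tone_def)
  then show ?thesis using False by (auto simp: tone_def)
qed

lemma sh_divide: "sh (\<lambda>w. f w / c) u v = sh f u v / c"
  using sh_scale[of "1/c" f u v] by (simp add: divide_inverse mult.commute)

lemma pascal_sum:
  fixes A B :: "nat \<Rightarrow> real"
  shows "(\<Sum>m\<le>n. real (n choose m) * A m * B (Suc n - m)) + (\<Sum>m\<le>n. real (n choose m) * A (Suc m) * B (n - m))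
       = (\<Sum>m\<le>Suc n. real (Suc n choose m) * A m * B (Suc n - m))"
proof -
  have r: "(\<Sum>m\<le>Suc n. real (Suc n choose m) * A m * B (Suc n - m))
      = A 0 * B (Suc n) + (\<Sum>m\<le>n. real (n choose m) * A (Suc m) * B (n - m)) + (\<Sum>m\<le>n. real (n choose Suc m) * A (Suc m) * B (n - m))"
    by (simp add: sum.atMost_Suc_shift del: sum.atMost_Suc) (simp add: algebra_simps sum.distrib)
  have l: "(\<Sum>m\<le>n. real (n choose m) * A m * B (Suc n - m)) = A 0 * B (Suc n) + (\<Sum>m\<le>n. real (n choose Suc m) * A (Suc m) * B (n - m))"
  proof -
    have "(\<Sum>m\<le>n. real (n choose m) * A m * B (Suc n - m)) = (\<Sum>m\<le>Suc n. real (n choose m) * A m * B (Suc n - m))"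
      by simp
    also have "\<dots> = A 0 * B (Suc n) + (\<Sum>m\<le>n. real (n choose Suc m) * A (Suc m) * B (n - m))"
      by (simp add: sum.atMost_Suc_shift del: sum.atMost_Suc)
    finally show ?thesis .
  qed
  show ?thesis using l r by simp
qed

lemma tmult_apply: "length v \<le> k \<Longrightarrow> tmult k x y v = (\<Sum>j\<le>length v. x (take j v) * y (drop j v))"
  by (simp add: tmult_def)

lemma sh_tpow:
  assumes "PR d k a" "length u + length v \<le> k"
  shows "sh (tpow k a n) u v = (\<Sum>m\<le>n. real (n choose m) * tpow k a m u * tpow k a (n - m) v)"
  using assms(2)
proof (induction n arbitrary: u v)
  case 0
  then show ?case by (simp add: sh_tone)
next
  case (Suc n)
  define P where "P = tpow k a"
  have lu: "length u \<le> k" and lv: "length v \<le> k" using Suc.prems by auto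
  have "sh (tpow k a (Suc n)) u v = (\<Sum>j\<le>length v. a (take j v) * sh (P n) u (drop j v)) + (\<Sum>i\<le>length u. a (take i u) * sh (P n) (drop i u) v)"
    unfolding tpow_Suc P_def by (rule sh_prim_mult[OF assms(1) Suc.prems])
  also have "(\<Sum>j\<le>length v. a (take j v) * sh (P n) u (drop j v))
     = (\<Sum>j\<le>length v. a (take j v) * (\<Sum>m\<le>n. real (n choose m) * P m u * P (n - m) (drop j v)))"
    using Suc.IH Suc.prems by (intro sum.cong refl) (simp add: P_def)
  also have "\<dots> = (\<Sum>m\<le>n. real (n choose m) * P m u * (\<Sum>j\<le>length v. a (take j v) * P (n - m) (drop j v)))"
    by (simp add: sum_distrib_left sum_distrib_right algebra_simps sum.swap[of _ "{..length v}"])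
  also have "\<dots> = (\<Sum>m\<le>n. real (n choose m) * P m u * P (Suc n - m) v)"
    by (intro sum.cong refl) (simp add: P_def tpow_Suc tmult_apply[OF lv] Suc_diff_le)
  also have "(\<Sum>i\<le>length u. a (take i u) * sh (P n) (drop i u) v)
     = (\<Sum>i\<le>length u. a (take i u) * (\<Sum>m\<le>n. real (n choose m) * P m (drop i u) * P (n - m) v))"
    using Suc.IH Suc.prems by (intro sum.cong refl) (simp add: P_def)
  also have "\<dots> = (\<Sum>m\<le>n. real (n choose m) * (\<Sum>i\<le>length u. a (take i u) * P m (drop i u)) * P (n - m) v)"
    by (simp add: sum_distrib_left sum_distrib_right algebra_simps sum.swap[of _ "{..length u}"])
  also have "\<dots> = (\<Sum>m\<le>n. real (n choose m) * P (Suc m) u * P (n - m) v)"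
    by (intro sum.cong refl) (simp add: P_def tpow_Suc tmult_apply[OF lu])
  finally show ?case using pascal_sum[of n "\<lambda>m. P m u" "\<lambda>m. P m v"] by (simp add: P_def)
qed

lemma tpow_zero_short: "II 1 a \<Longrightarrow> length u < m \<Longrightarrow> tpow k a m u = 0"
  using tpow_II[of a m k] by (simp add: II_def)

lemma texp_nil: "II 1 a \<Longrightarrow> texp k a [] = 1"
proof -
  assume a: "II 1 a"
  have "texp k a [] = (\<Sum>l\<le>k. if l = 0 then 1 else 0)"
    unfolding texp_def by (intro sum.cong refl) (auto simp: tone_def tpow_zero_short[OF a])
  then show ?thesis by simp
qed

lemma PR_texp_GL:
  assumes "PR d k a"
  shows "GL d k (texp k a)"
proof -
  have aI: "II 1 a" using assms by (rule PR_II)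
  have T: "texp k a \<in> T d k" using assms by (simp add: PR_def T_texp)
  have "sh (texp k a) u v = texp k a u * texp k a v" if l: "length u + length v \<le> k" for u v
  proof -
    define g where "g = (\<lambda>i j. tpow k a i u / fact i * (tpow k a j v / fact j))"
    define S where "S = {..length u} \<times> {..length v}"
    have gz: "g i j = 0" if "(i, j) \<notin> S" for i j
      using that tpow_zero_short[OF aI] by (auto simp: g_def S_def)
    have "sh (texp k a) u v = (\<Sum>l\<le>k. sh (tpow k a l) u v / fact l)"
      unfolding texp_def by (simp add: sh_sum sh_divide)
    also have "\<dots> = (\<Sum>l\<le>k. \<Sum>m\<le>l. g m (l - m))"
    proof (intro sum.cong refl)
      fix l assume "l \<in> {..k}"
      have "sh (tpow k a l) u v / fact l = (\<Sum>m\<le>l. real (l choose m) * tpow k a m u * tpow k a (l - m) v / fact l)"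
        by (simp add: sh_tpow[OF assms l] sum_divide_distrib)
      also have "\<dots> = (\<Sum>m\<le>l. g m (l - m))"
        by (intro sum.cong refl) (simp add: g_def binomial_fact)
      finally show "sh (tpow k a l) u v / fact l = (\<Sum>m\<le>l. g m (l - m))" .
    qed
    also have "\<dots> = (\<Sum>(i,j)\<in>{(i,j). i + j \<le> k}. g i j)"
      by (rule sum.triangle_reindex_eq[symmetric])
    also have "\<dots> = (\<Sum>(i,j)\<in>S. g i j)"
    proof (rule sum.mono_neutral_right)
      show "finite {(i, j). i + j \<le> k}"
        by (rule finite_subset[of _ "{..k} \<times> {..k}"]) auto
      show "S \<subseteq> {(i, j). i + j \<le> k}" using l by (auto simp: S_def)
      show "\<forall>x\<in>{(i, j). i + j \<le> k} - S. (case x of (i, j) \<Rightarrow> g i j) = 0" using gz by auto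
    qed
    also have "\<dots> = (\<Sum>(i,j)\<in>{..k} \<times> {..k}. g i j)"
    proof (rule sum.mono_neutral_left)
      show "S \<subseteq> {..k} \<times> {..k}" using l by (auto simp: S_def)
      show "\<forall>x\<in>{..k} \<times> {..k} - S. (case x of (i, j) \<Rightarrow> g i j) = 0" using gz by auto
    qed simp
    also have "\<dots> = texp k a u * texp k a v"
      by (simp add: texp_def g_def sum_product sum.cartesian_product)
    finally show ?thesis .
  qed
  then show ?thesis using T texp_nil[OF aI] by (simp add: GL_def)
qed

lemma G_GL: "x \<in> G d k \<Longrightarrow> GL d k x"
  by (auto simp: G_def intro: PR_texp_GL lie_PR)

unbundle fps_syntax

definition fev :: "nat \<Rightarrow> tensor \<Rightarrow> real fps \<Rightarrow> tensor" where
  "fev k a f = (\<lambda>w. \<Sum>n\<le>k. f $ n * tpow k a n w)"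

lemma fev_mult:
  assumes a: "II 1 a"
  shows "tmult k (fev k a f) (fev k a g) = fev k a (f * g)"
proof
  fix w
  define h where "h = (\<lambda>i j. f $ i * g $ j * tpow k a (i + j) w)"
  have hz: "h i j = 0" if "k < i + j" for i j
    using tpow_big[OF a that] by (simp add: h_def)
  have "tmult k (fev k a f) (fev k a g) w = (\<Sum>i\<le>k. \<Sum>j\<le>k. h i j)"
    unfolding fev_def
    by (simp add: tmult_scale_left tmult_scale_right tmult_sum_left tmult_sum_right tpow_add[symmetric] h_def mult.assoc sum_distrib_left)
  also have "\<dots> = (\<Sum>(i,j)\<in>{..k} \<times> {..k}. h i j)"
    by (simp add: sum.cartesian_product)
  also have "\<dots> = (\<Sum>(i,j)\<in>{(i,j). i + j \<le> k}. h i j)"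
  proof (rule sum.mono_neutral_right)
    show "{(i, j). i + j \<le> k} \<subseteq> {..k} \<times> {..k}" by auto
    show "\<forall>x\<in>{..k} \<times> {..k} - {(i, j). i + j \<le> k}. (case x of (i, j) \<Rightarrow> h i j) = 0"
      by (auto intro!: hz)
  qed simp
  also have "\<dots> = (\<Sum>n\<le>k. \<Sum>i\<le>n. h i (n - i))"
    by (rule sum.triangle_reindex_eq)
  also have "\<dots> = fev k a (f * g) w"
    unfolding fev_def fps_mult_nth
    by (intro sum.cong refl) (simp add: h_def sum_distrib_right atLeast0AtMost)
  finally show "tmult k (fev k a f) (fev k a g) w = fev k a (f * g) w" .
qed

lemma fev_one: "fev k a 1 = tone"
proof
  fix w
  have "fev k a 1 w = (\<Sum>n\<le>k. if n = 0 then tone w else 0)"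
    unfolding fev_def by (intro sum.cong refl) auto
  then show "fev k a 1 w = tone w" by simp
qed

lemma fev_pow: "II 1 a \<Longrightarrow> tpow k (fev k a f) l = fev k a (f ^ l)"
  by (induction l) (simp_all add: tpow_Suc fev_mult fev_one)

lemma fev_add: "fev k a (f + g) = (\<lambda>w. fev k a f w + fev k a g w)"
  by (auto simp: fev_def algebra_simps sum.distrib)
lemma fev_diff: "fev k a (f - g) = (\<lambda>w. fev k a f w - fev k a g w)"
  by (auto simp: fev_def algebra_simps sum_subtractf)
lemma fev_scale: "fev k a (fps_const c * f) = (\<lambda>w. c * fev k a f w)"
  by (auto simp: fev_def algebra_simps sum_distrib_left)
lemma fev_sum: "fev k a (\<Sum>i\<in>A. f i) = (\<lambda>w. \<Sum>i\<in>A. fev k a (f i) w)"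
  unfolding fev_def fps_sum_nth sum_distrib_right by (rule ext, rule sum.swap)

lemma fev_X: "II 1 a \<Longrightarrow> TK k a \<Longrightarrow> fev k a fps_X = a"
proof
  fix w assume a: "II 1 a" "TK k a"
  show "fev k a fps_X w = a w"
  proof (cases k)
    case 0
    then have "a = (\<lambda>w. 0)" using a II_TK_zero[of 0 a] by simp
    then show ?thesis using 0 by (simp add: fev_def)
  next
    case (Suc k')
    have "fev k a fps_X w = (\<Sum>n\<le>k. if n = Suc 0 then tpow k a (Suc 0) w else 0)"
      unfolding fev_def by (intro sum.cong refl) (auto simp: fps_X_def)
    also have "\<dots> = tpow k a (Suc 0) w"
      by (subst sum.delta[OF finite_atMost]) (simp add: Suc)
    finally show ?thesis using a by (simp add: tpow_1)
  qed
qed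

lemma texp_fev: "texp k a = fev k a (fps_exp 1)"
  by (auto simp: texp_def fev_def divide_inverse mult.commute)

lemma fev_cong: "(\<And>n. n \<le> k \<Longrightarrow> f $ n = g $ n) \<Longrightarrow> fev k a f = fev k a g"
  by (auto simp: fev_def intro!: sum.cong)

lemma sgn_pow: "1 \<le> l \<Longrightarrow> (-1::real) ^ (l - Suc 0) = (-1) ^ Suc l"
  by (cases l) simp_all

lemma log_exp:
  assumes a: "II 1 a" "TK k a"
  shows "tlog k (texp k a) = a"
proof -
  define E where "E = fps_exp (1::real) - 1"
  have E0: "E $ 0 = 0" by (simp add: E_def)
  have sub: "(\<lambda>v. texp k a v - tone v) = fev k a E"
    by (simp add: E_def fev_diff texp_fev fev_one)
  have "tlog k (texp k a) = (\<lambda>w. \<Sum>l\<in>{1..k}. fev k a (fps_const ((-1) ^ (l + 1) / real l) * E ^ l) w)"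
    unfolding tlog_def sub by (simp add: fev_pow[OF a(1)] fev_scale)
  also have "\<dots> = fev k a (\<Sum>l\<in>{1..k}. fps_const ((-1) ^ (l + 1) / real l) * E ^ l)"
    by (simp add: fev_sum)
  also have "\<dots> = fev k a fps_X"
  proof (rule fev_cong)
    fix n assume n: "n \<le> k"
    have "(\<Sum>l\<in>{1..k}. fps_const ((-1) ^ (l + 1) / real l) * E ^ l) $ n
        = (\<Sum>l\<in>{1..k}. ((-1) ^ (l + 1) / real l) * (E ^ l $ n))"
      by (simp add: fps_sum_nth)
    also have "\<dots> = (\<Sum>l\<in>{0..k}. fps_ln 1 $ l * (E ^ l $ n))"
    proof -
      have "(\<Sum>l\<in>{0..k}. fps_ln 1 $ l * (E ^ l $ n)) = (\<Sum>l\<in>{1..k}. fps_ln 1 $ l * (E ^ l $ n))"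
        by (rule sum.mono_neutral_right) (auto simp: Suc_le_eq)
      also have "\<dots> = (\<Sum>l\<in>{1..k}. ((-1) ^ (l + 1) / real l) * (E ^ l $ n))"
        by (intro sum.cong refl) (auto simp: fps_ln_nth sgn_pow)
      finally show ?thesis by simp
    qed
    also have "\<dots> = (\<Sum>l\<in>{0..n}. fps_ln 1 $ l * (E ^ l $ n))"
    proof (rule sum.mono_neutral_right)
      show "{0..n} \<subseteq> {0..k}" using n by auto
      show "\<forall>i\<in>{0..k} - {0..n}. fps_ln 1 $ i * (E ^ i $ n) = 0"
        using startsby_zero_power_prefix[OF E0] by auto
    qed simp
    also have "\<dots> = (fps_ln 1 oo E) $ n"
      by (simp add: fps_compose_nth)
    also have "\<dots> = fps_X $ n"
      using fps_inv_fps_exp_compose(1)[of "1::real"] fps_ln_fps_exp_inv[of "1::real"] by (simp add: E_def)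
    finally show "(\<Sum>l\<in>{1..k}. fps_const ((-1) ^ (l + 1) / real l) * E ^ l) $ n = fps_X $ n" .
  qed
  also have "\<dots> = a" by (rule fev_X[OF a])
  finally show ?thesis .
qed

lemma tpow_neg: "tpow k (\<lambda>w. - a w) n = (\<lambda>w. (-1) ^ n * tpow k a n w)"
proof (induction n)
  case (Suc n)
  have "tpow k (\<lambda>w. - a w) (Suc n) = tmult k (\<lambda>w. (-1) * a w) (\<lambda>w. (-1) ^ n * tpow k a n w)"
    by (simp add: tpow_Suc Suc)
  also have "\<dots> = (\<lambda>w. (-1) * ((-1) ^ n * tmult k a (tpow k a n) w))"
    by (simp only: tmult_scale_left tmult_scale_right)
  finally show ?case by (simp add: tpow_Suc)
qed simp

lemma texp_neg: "texp k (\<lambda>w. - a w) = fev k a (fps_exp (-1))"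
  by (auto simp: texp_def fev_def tpow_neg divide_inverse mult.commute intro!: sum.cong)

lemma texp_inv:
  assumes a: "II 1 a"
  shows "tmult k (texp k a) (texp k (\<lambda>w. - a w)) = tone" "tmult k (texp k (\<lambda>w. - a w)) (texp k a) = tone"
proof -
  have "fps_exp (1::real) * fps_exp (-1) = 1" "fps_exp (-1::real) * fps_exp 1 = 1"
    by (simp_all flip: fps_exp_add_mult)
  then show "tmult k (texp k a) (texp k (\<lambda>w. - a w)) = tone" "tmult k (texp k (\<lambda>w. - a w)) (texp k a) = tone"
    unfolding texp_neg unfolding texp_fev by (simp_all add: fev_mult[OF a] fev_one)
qed

lemma II_plus: "II 1 a \<Longrightarrow> II n e \<Longrightarrow> 1 \<le> n \<Longrightarrow> II 1 (\<lambda>v. a v + e v)"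
  by (auto simp: II_def)

lemma pert2:
  assumes a: "II 1 a" and e: "II n e" and n: "1 \<le> n"
  shows "II (Suc n) (\<lambda>w. tpow k (\<lambda>v. a v + e v) (Suc (Suc l)) w - tpow k a (Suc (Suc l)) w)"
proof -
  define b where "b = (\<lambda>v. a v + e v)"
  have bI: "II 1 b" unfolding b_def by (rule II_plus[OF a e n])
  have D1: "II n (\<lambda>w. tpow k b (Suc l) w - tpow k a (Suc l) w)"
    by (rule tpow_cong_II) (use e in \<open>simp add: b_def\<close>)
  have eq: "(\<lambda>w. tpow k b (Suc (Suc l)) w - tpow k a (Suc (Suc l)) w)
     = (\<lambda>w. tmult k e (tpow k b (Suc l)) w + tmult k a (\<lambda>w. tpow k b (Suc l) w - tpow k a (Suc l) w) w)"
  proof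
    fix w
    have "tpow k b (Suc (Suc l)) w = tmult k a (tpow k b (Suc l)) w + tmult k e (tpow k b (Suc l)) w"
      unfolding tpow_Suc[of k b "Suc l"] by (simp add: b_def tmult_add_left)
    moreover have "tpow k a (Suc (Suc l)) w = tmult k a (tpow k a (Suc l)) w"
      by (simp add: tpow_Suc[of k a "Suc l"])
    moreover have "tmult k a (\<lambda>w. tpow k b (Suc l) w - tpow k a (Suc l) w) w = tmult k a (tpow k b (Suc l)) w - tmult k a (tpow k a (Suc l)) w"
      by (simp add: tmult_diff_right)
    ultimately show "tpow k b (Suc (Suc l)) w - tpow k a (Suc (Suc l)) w = tmult k e (tpow k b (Suc l)) w + tmult k a (\<lambda>w. tpow k b (Suc l) w - tpow k a (Suc l) w) w"
      by linarith
  qed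
  have "II (n + 1) (tmult k e (tpow k b (Suc l)))"
    by (rule tmult_II[OF e]) (rule II_mono[OF tpow_II[OF bI]], simp)
  moreover have "II (1 + n) (tmult k a (\<lambda>w. tpow k b (Suc l) w - tpow k a (Suc l) w))"
    by (rule tmult_II[OF a D1])
  ultimately show ?thesis unfolding b_def[symmetric] eq by (intro II_add) auto
qed

lemma pert1:
  assumes "TK k e" "1 \<le> k"
  shows "tpow k (\<lambda>v. a v + e v) (Suc 0) w - tpow k a (Suc 0) w = e w"
proof -
  have "tpow k (\<lambda>v. a v + e v) (Suc 0) w - tpow k a (Suc 0) w = tmult k e tone w"
    by (simp add: tpow_Suc tmult_add_left)
  then show ?thesis using assms by (simp add: tmult_tone_right)
qed

lemma texp_zero: "texp k (\<lambda>w. 0) = tone"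
proof
  fix w
  have "texp k (\<lambda>w. 0) w = (\<Sum>l\<le>k. if l = 0 then tone w else 0)"
    unfolding texp_def by (intro sum.cong refl) (auto simp: tpow_Suc gr0_conv_Suc)
  then show "texp k (\<lambda>w. 0) w = tone w" by simp
qed

lemma exp_pert:
  assumes a: "II 1 a" and e: "II n e" and n: "1 \<le> n" and eT: "TK k e"
  shows "II (Suc n) (\<lambda>w. texp k (\<lambda>v. a v + e v) w - texp k a w - e w)"
  unfolding II_def
proof (intro allI impI)
  fix w :: "nat list" assume w: "length w < Suc n"
  show "texp k (\<lambda>v. a v + e v) w - texp k a w - e w = 0"
  proof (cases "k = 0")
    case True
    then have "e = (\<lambda>w. 0)" using II_TK_zero[of 0 e] eT II_mono[OF e n] by simp
    then show ?thesis by (simp add: texp_def)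
  next
    case False
    have "texp k (\<lambda>v. a v + e v) w - texp k a w = (\<Sum>l\<le>k. (tpow k (\<lambda>v. a v + e v) l w - tpow k a l w) / fact l)"
      by (simp add: texp_def sum_subtractf diff_divide_distrib)
    also have "\<dots> = (\<Sum>l\<le>k. if l = Suc 0 then e w else 0)"
    proof (intro sum.cong refl)
      fix l assume "l \<in> {..k}"
      show "(tpow k (\<lambda>v. a v + e v) l w - tpow k a l w) / fact l = (if l = Suc 0 then e w else 0)"
      proof (cases l)
        case 0 then show ?thesis by simp
      next
        case (Suc l')
        show ?thesis
        proof (cases l')
          case 0 then show ?thesis using Suc pert1[OF eT] False by simp
        next
          case (Suc l'')
          then show ?thesis using \<open>l = Suc l'\<close> pert2[OF a e n, of k l''] w by (simp add: II_def)
        qed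
      qed
    qed
    also have "\<dots> = e w" using False by (subst sum.delta[OF finite_atMost]) simp
    finally show ?thesis by simp
  qed
qed

lemma log_pert:
  assumes y: "y [] = 1" and e: "II n e" and n: "1 \<le> n" and eT: "TK k e"
  shows "II (Suc n) (\<lambda>w. tlog k (\<lambda>v. y v - e v) w - tlog k y w + e w)"
  unfolding II_def
proof (intro allI impI)
  fix w :: "nat list" assume w: "length w < Suc n"
  define b where "b = (\<lambda>v. y v - tone v)"
  define me where "me = (\<lambda>v. - e v)"
  have bI: "II 1 b" using y by (auto simp: II_def b_def tone_def)
  have meI: "II n me" using e by (auto simp: II_def me_def)
  have meT: "TK k me" using eT by (auto simp: TK_def me_def)
  have s: "(\<lambda>v. y v - e v - tone v) = (\<lambda>v. b v + me v)" by (auto simp: b_def me_def)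
  have "tlog k (\<lambda>v. y v - e v) w - tlog k y w = (\<Sum>l\<in>{1..k}. ((-1) ^ (l + 1) / real l) * (tpow k (\<lambda>v. b v + me v) l w - tpow k b l w))"
    unfolding tlog_def s b_def[symmetric] by (simp only: sum_subtractf[symmetric] right_diff_distrib[symmetric])
  also have "\<dots> = (\<Sum>l\<in>{1..k}. if l = Suc 0 then me w else 0)"
  proof (intro sum.cong refl)
    fix l assume l: "l \<in> {1..k}"
    show "((-1) ^ (l + 1) / real l) * (tpow k (\<lambda>v. b v + me v) l w - tpow k b l w) = (if l = Suc 0 then me w else 0)"
    proof (cases "l = Suc 0")
      case True then show ?thesis using pert1[OF meT, of b w] l by simp
    next
      case False
      have "2 \<le> l" using l False by auto
      then have "\<exists>l''. l = Suc (Suc l'')" by presburger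
      then obtain l'' where "l = Suc (Suc l'')" by blast
      then show ?thesis using pert2[OF bI meI n, of k l''] w by (simp add: II_def)
    qed
  qed
  also have "\<dots> = (if 1 \<le> k then me w else 0)" by (simp add: sum.delta)
  also have "\<dots> = - e w"
  proof (cases "1 \<le> k")
    case False
    then have "k = 0" by simp
    then have "e = (\<lambda>w. 0)" using II_TK_zero[of 0 e] eT II_mono[OF e n] by simp
    then show ?thesis using False by simp
  qed (simp add: me_def)
  finally show "tlog k (\<lambda>v. y v - e v) w - tlog k y w + e w = 0" by simp
qed

lemma log_cong: "II n (\<lambda>w. y w - y' w) \<Longrightarrow> II n (\<lambda>w. tlog k y w - tlog k y' w)"
proof -
  assume h: "II n (\<lambda>w. y w - y' w)"
  have "II n (\<lambda>w. tpow k (\<lambda>v. y v - tone v) l w - tpow k (\<lambda>v. y' v - tone v) l w)" for l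
    by (rule tpow_cong_II) (use h in \<open>simp add: II_def\<close>)
  then show ?thesis
    unfolding tlog_def by (simp add: sum_subtractf[symmetric] right_diff_distrib[symmetric] II_def)
qed

lemma level_apply: "level j z w = (if length w = j then z w else 0)"
  by (simp add: level_def)

lemma T_level: "z \<in> T d k \<Longrightarrow> level j z \<in> T d k"
  by (auto simp: T_def level_def)

lemma sh_level: "sh (level j z) u v = (if length u + length v = j then sh z u v else 0)"
proof (cases "length u + length v = j")
  case True
  then show ?thesis by (simp, intro sh_cong) (simp add: level_def)
next
  case False
  then have "sh (level j z) u v = sh (\<lambda>w. 0) u v" by (intro sh_cong) (simp add: level_def)
  then show ?thesis using False by simp
qed

lemma GL_II1: "GL d k y \<Longrightarrow> II 1 (\<lambda>w. y w - tone w)"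
  by (auto simp: GL_def II_def tone_def)

lemma GL_exp_approx:
  assumes y: "GL d k y" and n: "n \<le> k"
  shows "\<exists>a. PR d k a \<and> II (Suc n) (\<lambda>w. texp k a w - y w)"
  using n
proof (induction n)
  case 0
  have "II 1 (\<lambda>w. texp k (\<lambda>w. 0) w - y w)"
    using y by (auto simp: texp_zero GL_def II_def tone_def)
  then show ?case using PR_zero by auto
next
  case (Suc m)
  then obtain a where a: "PR d k a" "II (Suc m) (\<lambda>w. texp k a w - y w)" by auto
  define e where "e = level (Suc m) (\<lambda>w. y w - texp k a w)"
  have aI: "II 1 a" by (rule PR_II[OF a(1)])
  have eI: "II (Suc m) e" by (auto simp: e_def II_def level_def)
  have yT: "y \<in> T d k" using y by (simp add: GL_def)
  have eaT: "texp k a \<in> T d k" using a by (simp add: PR_def T_texp)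
  have eT: "e \<in> T d k" unfolding e_def by (intro T_level T_diff yT eaT)
  have eGL: "GL d k (texp k a)" by (rule PR_texp_GL[OF a(1)])
  have ePR: "PR d k e"
  proof -
    have "sh e u v = 0" if "u \<noteq> []" "v \<noteq> []" "length u + length v \<le> k" for u v
    proof (cases "length u + length v = Suc m")
      case True
      have "length u > 0" "length v > 0" using that by auto
      then have lu: "length u < Suc m" "length v < Suc m" using True by linarith+
      have "sh (\<lambda>w. y w - texp k a w) u v = y u * y v - texp k a u * texp k a v"
        using that y eGL by (simp add: sh_diff GL_def)
      also have "\<dots> = 0" using a(2) lu by (simp add: II_def)
      finally show ?thesis using True by (simp add: e_def sh_level)
    next
      case False then show ?thesis by (simp add: e_def sh_level)
    qed
    moreover have "e [] = 0" by (simp add: e_def level_def)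
    ultimately show ?thesis using eT by (simp add: PR_def)
  qed
  have pert: "II (Suc (Suc m)) (\<lambda>w. texp k (\<lambda>v. a v + e v) w - texp k a w - e w)"
    by (rule exp_pert[OF aI eI]) (simp_all add: T_TK[OF eT])
  have "II (Suc (Suc m)) (\<lambda>w. texp k (\<lambda>v. a v + e v) w - y w)"
    unfolding II_def
  proof (intro allI impI)
    fix w :: "nat list" assume w: "length w < Suc (Suc m)"
    have "texp k (\<lambda>v. a v + e v) w - texp k a w - e w = 0" using pert w by (simp only: II_def)
    then have "texp k (\<lambda>v. a v + e v) w = texp k a w + e w" by linarith
    moreover have "texp k a w + e w = y w"
    proof (cases "length w = Suc m")
      case True then show ?thesis by (simp add: e_def level_def)
    next
      case False
      then have "length w < Suc m" using w by simp
      then show ?thesis using a(2) by (simp add: e_def level_def II_def)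
    qed
    ultimately show "texp k (\<lambda>v. a v + e v) w - y w = 0" by simp
  qed
  moreover have "PR d k (\<lambda>v. a v + e v)" by (rule PR_add[OF a(1) ePR])
  ultimately show ?case by blast
qed

lemma GL_exp:
  assumes y: "GL d k y"
  shows "\<exists>a. PR d k a \<and> texp k a = y"
proof -
  obtain a where a: "PR d k a" "II (Suc k) (\<lambda>w. texp k a w - y w)"
    using GL_exp_approx[OF y order_refl] by auto
  have "TK k (\<lambda>w. texp k a w - y w)"
    using a y by (intro TK_diff T_TK T_texp) (auto simp: PR_def GL_def)
  then have "(\<lambda>w. texp k a w - y w) = (\<lambda>w. 0)" using a(2) by (intro II_TK_zero)
  then have "texp k a = y"
  proof -
    assume h: "(\<lambda>w. texp k a w - y w) = (\<lambda>w. 0)"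
    show "texp k a = y"
    proof
      fix w show "texp k a w = y w" using fun_cong[OF h, of w] by simp
    qed
  qed
  then show ?thesis using a by blast
qed

lemma GL_log: assumes "GL d k y" shows "PR d k (tlog k y)"
proof -
  obtain a where a: "PR d k a" "texp k a = y" using GL_exp[OF assms] by blast
  have "tlog k y = a" using log_exp[OF PR_II[OF a(1)] PR_TK[OF a(1)]] a(2) by simp
  then show ?thesis using a(1) by simp
qed

lemma GL_inv:
  assumes y: "GL d k y"
  shows "GL d k (tinvk k y)"
proof -
  obtain a where a: "PR d k a" "texp k a = y" using GL_exp[OF y] by blast
  have aI: "II 1 a" by (rule PR_II[OF a(1)])
  have "tinvk k y = texp k (\<lambda>w. - a w)"
  proof (rule inv_unique[symmetric])
    have aT: "a \<in> T d k" using a by (simp add: PR_def)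
    have naT: "(\<lambda>w. - a w) \<in> T d k" using T_scale[OF aT, of "-1"] by simp
    show "TK k (texp k (\<lambda>w. - a w))" by (rule T_TK[OF T_texp[OF naT]])
    show "TK k (tinvk k y)" by simp
    have yT: "TK k y" "y [] = 1" using y by (auto simp: GL_def T_TK)
    show "tmult k y (tinvk k y) = tone" by (rule tinvk_inv(1)[OF yT])
    show "tmult k (texp k (\<lambda>w. - a w)) y = tone" unfolding a(2)[symmetric] by (rule texp_inv(2)[OF aI])
  qed
  moreover have "PR d k (\<lambda>w. - a w)" using PR_scale[OF a(1), of "-1"] by simp
  ultimately show ?thesis using PR_texp_GL by simp
qed

lemma lie_sum: "(\<And>a. a \<in> A \<Longrightarrow> f a \<in> lie_alg d k) \<Longrightarrow> (\<lambda>w. \<Sum>a\<in>A. f a w) \<in> lie_alg d k"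
proof (induction A rule: infinite_finite_induct)
  case (infinite A) then show ?case by (simp add: lie_alg.zero)
next
  case empty then show ?case by (simp add: lie_alg.zero)
next
  case (insert x F) then show ?case by (simp add: lie_alg.add)
qed

fun dyn :: "nat \<Rightarrow> nat \<Rightarrow> nat \<Rightarrow> tensor \<Rightarrow> tensor" where
  "dyn d k 0 p = (\<lambda>w. 0)"
| "dyn d k (Suc 0) p = (\<lambda>w. \<Sum>a<d. p [a] * tbasis k a w)"
| "dyn d k (Suc (Suc n)) p = (\<lambda>w. \<Sum>a<d. tbracket k (tbasis k a) (dyn d k (Suc n) (ld a p)) w)"

lemma dyn_lie: "dyn d k n p \<in> lie_alg d k"
proof (induction d k n p rule: dyn.induct)
  case (1 d k p) then show ?case by (simp add: lie_alg.zero)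
next
  case (2 d k p)
  show ?case unfolding dyn.simps by (rule lie_sum) (auto intro: lie_alg.smult lie_alg.gen)
next
  case (3 d k n p)
  show ?case unfolding dyn.simps by (rule lie_sum) (auto intro: lie_alg.bracket lie_alg.gen 3)
qed

definition HOM :: "nat \<Rightarrow> tensor \<Rightarrow> bool" where
  "HOM n x \<longleftrightarrow> (\<forall>w. length w \<noteq> n \<longrightarrow> x w = 0)"

lemma HOM_tmult: "HOM a x \<Longrightarrow> HOM b y \<Longrightarrow> HOM (a + b) (tmult k x y)"
  unfolding HOM_def
proof (intro allI impI)
  fix w :: "nat list" assume x: "\<forall>w. length w \<noteq> a \<longrightarrow> x w = 0" and y: "\<forall>w. length w \<noteq> b \<longrightarrow> y w = 0"
    and w: "length w \<noteq> a + b"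
  have "\<And>i. i \<le> length w \<Longrightarrow> x (take i w) * y (drop i w) = 0"
  proof -
    fix i assume i: "i \<le> length w"
    show "x (take i w) * y (drop i w) = 0"
    proof (cases "i = a")
      case True then have "length (drop i w) \<noteq> b" using w i by auto
      then show ?thesis using y by simp
    next
      case False then show ?thesis using x i by simp
    qed
  qed
  then show "tmult k x y w = 0" unfolding tmult_def by (auto intro!: sum.neutral)
qed

lemma HOM_sum: "(\<And>a. a \<in> A \<Longrightarrow> HOM n (f a)) \<Longrightarrow> HOM n (\<lambda>w. \<Sum>a\<in>A. f a w)"
  by (auto simp: HOM_def intro!: sum.neutral)

lemma HOM_tbasis: "HOM 1 (tbasis k a)"
  by (auto simp: HOM_def tbasis_def)

lemma dyn_HOM: "HOM n (dyn d k n p)"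
proof (induction d k n p rule: dyn.induct)
  case (1 d k p) then show ?case by (simp add: HOM_def)
next
  case (2 d k p) then show ?case by (auto simp: HOM_def tbasis_def intro!: sum.neutral)
next
  case (3 d k n p)
  have "HOM (Suc (Suc n)) (tbracket k (tbasis k a) (dyn d k (Suc n) (ld a p)))" if a: "a \<in> {..<d}" for a
  proof -
    have h1: "HOM (1 + Suc n) (tmult k (tbasis k a) (dyn d k (Suc n) (ld a p)))"
      by (rule HOM_tmult[OF HOM_tbasis 3[OF a]])
    have h2: "HOM (Suc n + 1) (tmult k (dyn d k (Suc n) (ld a p)) (tbasis k a))"
      by (rule HOM_tmult[OF 3[OF a] HOM_tbasis])
    show ?thesis using h1 h2 by (auto simp: HOM_def tbracket_def)
  qed
  then show ?case unfolding dyn.simps by (intro HOM_sum)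
qed

lemma tmult_tbasis_left:
  assumes "v \<noteq> []" "length v \<le> k"
  shows "tmult k (tbasis k a) D v = (if hd v = a then D (tl v) else 0)"
proof -
  have "tmult k (tbasis k a) D v = (\<Sum>i\<le>length v. tbasis k a (take i v) * D (drop i v))"
    using assms by (simp add: tmult_def)
  also have "\<dots> = (\<Sum>i\<le>length v. if i = 1 then (if hd v = a then D (tl v) else 0) else 0)"
  proof (intro sum.cong refl)
    fix i assume i: "i \<in> {..length v}"
    show "tbasis k a (take i v) * D (drop i v) = (if i = 1 then (if hd v = a then D (tl v) else 0) else 0)"
      using assms i by (cases v; cases i) (auto simp: tbasis_def drop_Suc)
  qed
  also have "\<dots> = (if hd v = a then D (tl v) else 0)"
    using assms by (subst sum.delta) (auto simp: Suc_le_eq)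
  finally show ?thesis .
qed

lemma tmult_tbasis_right:
  assumes "v \<noteq> []" "length v \<le> k"
  shows "tmult k D (tbasis k a) v = (if last v = a then D (butlast v) else 0)"
proof -
  obtain u c where v: "v = u @ [c]" using assms(1) rev_exhaust by blast
  have k1: "1 \<le> k" using assms by (cases v) auto
  have "tmult k D (tbasis k a) v = (\<Sum>i\<le>Suc (length u). D (take i v) * tbasis k a (drop i v))"
    using assms v by (simp add: tmult_def)
  also have "\<dots> = (\<Sum>i\<le>Suc (length u). if i = length u then (if c = a then D u else 0) else 0)"
  proof (intro sum.cong refl)
    fix i assume i: "i \<in> {..Suc (length u)}"
    show "D (take i v) * tbasis k a (drop i v) = (if i = length u then (if c = a then D u else 0) else 0)"
    proof (cases "i \<le> length u")
      case True
      then have "drop i v = drop i u @ [c]" "take i v = take i u" using v by auto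
      then show ?thesis using True k1 by (auto simp: tbasis_def)
    next
      case False
      then have "drop i v = []" using v i by auto
      then show ?thesis using False by (auto simp: tbasis_def)
    qed
  qed
  also have "\<dots> = (if last v = a then D (butlast v) else 0)"
    using v by (subst sum.delta) auto
  finally show ?thesis .
qed

definition dr :: "tensor \<Rightarrow> nat list \<Rightarrow> real" where
  "dr p v = (\<Sum>j<length v. (-1) ^ (length v - 1 - j) * sh (\<lambda>w. p (w @ [v ! j])) (take j v) (rev (drop (Suc j) v)))"

lemma dyn_step:
  assumes "length v = Suc (Suc n)" "length v \<le> k" "hd v < d" "last v < d"
  shows "dyn d k (Suc (Suc n)) p v = dyn d k (Suc n) (ld (hd v) p) (tl v) - dyn d k (Suc n) (ld (last v) p) (butlast v)"
proof -
  have ne: "v \<noteq> []" using assms by auto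
  have "dyn d k (Suc (Suc n)) p v = (\<Sum>a<d. (if hd v = a then dyn d k (Suc n) (ld a p) (tl v) else 0)
      - (if last v = a then dyn d k (Suc n) (ld a p) (butlast v) else 0))"
    by (simp add: tbracket_def tmult_tbasis_left[OF ne assms(2)] tmult_tbasis_right[OF ne assms(2)])
  also have "\<dots> = dyn d k (Suc n) (ld (hd v) p) (tl v) - dyn d k (Suc n) (ld (last v) p) (butlast v)"
    using assms by (simp add: sum_subtractf sum.delta)
  finally show ?thesis .
qed

lemma dr_step:
  assumes m: "length m = n"
  shows "dr p (x # m @ [z]) = dr (ld x p) (m @ [z]) - dr (ld z p) (x # m)"
proof -
  define v where "v = x # m @ [z]"
  define aT where "aT = (\<lambda>j'. sh (\<lambda>w. p (x # w @ [(m @ [z]) ! j'])) (take j' (m @ [z])) (rev (drop (Suc j') (m @ [z]))))"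
  define bt where "bt = (\<lambda>j. sh (\<lambda>w. p (z # w @ [(x # m) ! j])) (take j (x # m)) (rev (drop (Suc j) (x # m))))"
  have key: "sh (\<lambda>w. p (w @ [v ! j])) (take j v) (rev (drop (Suc j) v))
     = (if j = 0 then 0 else aT (j - 1)) + (if j = Suc n then 0 else bt j)" if j: "j < Suc (Suc n)" for j
  proof (cases j)
    case 0
    then show ?thesis using m by (simp add: v_def bt_def)
  next
    case (Suc j'')
    show ?thesis
    proof (cases "j = Suc n")
      case True
      then show ?thesis using m Suc by (simp add: v_def aT_def nth_append)
    next
      case False
      then have j'': "j'' < n" using j Suc by simp
      have d1: "drop j'' m @ [z] = drop j'' (m @ [z])" using j'' m by simp
      have "rev (drop (Suc j) v) = z # rev (drop (Suc j'') m)"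
        using j'' m Suc by (simp add: v_def)
      moreover have "take j v = x # take j'' m" using j'' m Suc by (simp add: v_def)
      moreover have "v ! j = m ! j''" using j'' m Suc by (simp add: v_def nth_append)
      ultimately have "sh (\<lambda>w. p (w @ [v ! j])) (take j v) (rev (drop (Suc j) v))
         = sh (\<lambda>w. p (x # w @ [m ! j''])) (take j'' m) (z # rev (drop (Suc j'') m))
         + sh (\<lambda>w. p (z # w @ [m ! j''])) (x # take j'' m) (rev (drop (Suc j'') m))"
        by (simp add: sh_Cons ld_def)
      moreover have "aT (j - 1) = sh (\<lambda>w. p (x # w @ [m ! j''])) (take j'' m) (z # rev (drop (Suc j'') m))"
        using j'' m Suc by (simp add: aT_def nth_append)
      moreover have "bt j = sh (\<lambda>w. p (z # w @ [m ! j''])) (x # take j'' m) (rev (drop (Suc j'') m))"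
        using j'' m Suc by (simp add: bt_def)
      ultimately show ?thesis using False Suc by simp
    qed
  qed
  have "dr p v = (\<Sum>j<Suc (Suc n). (-1) ^ (Suc n - j) * ((if j = 0 then 0 else aT (j - 1)) + (if j = Suc n then 0 else bt j)))"
    unfolding dr_def using m key by (intro sum.cong) (auto simp: v_def)
  also have "\<dots> = (\<Sum>j<Suc (Suc n). (-1) ^ (Suc n - j) * (if j = 0 then 0 else aT (j - 1)))
      + (\<Sum>j<Suc (Suc n). (-1) ^ (Suc n - j) * (if j = Suc n then 0 else bt j))"
    by (simp add: algebra_simps sum.distrib)
  also have "(\<Sum>j<Suc (Suc n). (-1) ^ (Suc n - j) * (if j = 0 then 0 else aT (j - 1))) = (\<Sum>j<Suc n. (-1) ^ (n - j) * aT j)"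
    by (subst sum.lessThan_Suc_shift) simp
  also have "\<dots> = dr (ld x p) (m @ [z])"
    unfolding dr_def using m by (intro sum.cong) (auto simp: aT_def)
  also have "(\<Sum>j<Suc (Suc n). (-1) ^ (Suc n - j) * (if j = Suc n then 0 else bt j)) = (\<Sum>j<Suc n. (-1) ^ (Suc n - j) * bt j)"
    by (subst sum.lessThan_Suc) (auto intro: sum.cong)
  also have "\<dots> = - (\<Sum>j<Suc n. (-1) ^ (n - j) * bt j)"
    by (subst sum_negf[symmetric]) (auto intro!: sum.cong simp: Suc_diff_le)
  also have "(\<Sum>j<Suc n. (-1) ^ (n - j) * bt j) = dr (ld z p) (x # m)"
    unfolding dr_def using m by (intro sum.cong) (auto simp: bt_def)
  finally show ?thesis by (simp add: v_def ld_def)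
qed

lemma dyn_coeff:
  assumes "length v = Suc n" "Suc n \<le> k" "set v \<subseteq> {..<d}"
  shows "dyn d k (Suc n) p v = dr p v"
  using assms
proof (induction n arbitrary: p v)
  case 0
  then obtain c where v: "v = [c]" by (cases v) auto
  then have c: "c < d" using 0 by auto
  have "dyn d k (Suc 0) p v = (\<Sum>a<d. p [a] * tbasis k a v)" by simp
  also have "\<dots> = (\<Sum>a<d. if a = c then p [a] else 0)"
    using 0 v by (intro sum.cong) (auto simp: tbasis_def)
  also have "\<dots> = p [c]" using c by simp
  finally show ?case using v by (simp add: dr_def)
next
  case (Suc n)
  obtain x v' where v1: "v = x # v'" using Suc.prems(1) by (cases v) auto
  then have "v' \<noteq> []" using Suc.prems(1) by auto
  then obtain m z where "v' = m @ [z]" using rev_exhaust by blast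
  then have v: "v = x # m @ [z]" using v1 by simp
  have m: "length m = n" using Suc.prems(1) v by simp
  have xz: "x < d" "z < d" using Suc.prems(3) v by auto
  have "dyn d k (Suc (Suc n)) p v = dyn d k (Suc n) (ld x p) (m @ [z]) - dyn d k (Suc n) (ld z p) (x # m)"
    using dyn_step[of v n k d p] Suc.prems xz v by simp
  also have "\<dots> = dr (ld x p) (m @ [z]) - dr (ld z p) (x # m)"
    using Suc.IH[of "m @ [z]" "ld x p"] Suc.IH[of "x # m" "ld z p"] Suc.prems v m by (auto simp: ld_def)
  also have "\<dots> = dr p v" using dr_step[OF m] v by simp
  finally show ?case .
qed

lemma dr_prim:
  assumes p: "PR d k p" and L: "1 \<le> length v" "length v \<le> k"
  shows "dr p v = real (length v) * p v"
proof -
  define n where "n = length v"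
  define A where "A = (\<lambda>j. sh (\<lambda>w. p (w @ [v ! j])) (take j v) (rev (drop (Suc j) v)))"
  have last: "A (n - 1) = p v"
  proof -
    have "take (Suc (n - 1)) v = take (n - 1) v @ [v ! (n - 1)]"
      by (rule take_Suc_conv_app_nth) (use L in \<open>simp add: n_def\<close>)
    then have "take (n - 1) v @ [v ! (n - 1)] = v" using L by (simp add: n_def)
    then show ?thesis using L by (simp add: A_def n_def)
  qed
  have pair: "A j + A (Suc j) = 0" if j: "Suc j < n" for j
  proof -
    have d1: "drop (Suc j) v = v ! Suc j # drop (Suc (Suc j)) v" using j n_def by (simp add: Cons_nth_drop_Suc)
    have t1: "take (Suc j) v = take j v @ [v ! j]" using j n_def by (simp add: take_Suc_conv_app_nth)
    have r: "rev (drop (Suc (Suc j)) v) @ [v ! Suc j] = rev (drop (Suc j) v)" using d1 by simp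
    have eq1: "sh p (take (Suc j) v) (rev (drop (Suc j) v)) = A j + A (Suc j)"
      using sh_right[of p "take j v" "v ! j" "rev (drop (Suc (Suc j)) v)" "v ! Suc j"]
      unfolding r t1[symmetric] A_def .
    have ne1: "take (Suc j) v \<noteq> []" using j n_def by (cases v) auto
    have ne2: "rev (drop (Suc j) v) \<noteq> []" using j n_def by auto
    have len: "length (take (Suc j) v) + length (rev (drop (Suc j) v)) \<le> k" using j n_def L by auto
    have "sh p (take (Suc j) v) (rev (drop (Suc j) v)) = 0"
      using p ne1 ne2 len unfolding PR_def by blast
    then show ?thesis using eq1 by simp
  qed
  have Ai: "A (n - 1 - i) = (-1) ^ i * p v" if "i < n" for i
    using that
  proof (induction i)
    case 0 then show ?case using last by simp
  next
    case (Suc i)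
    have "A (n - 1 - Suc i) + A (Suc (n - 1 - Suc i)) = 0" using Suc.prems by (intro pair) simp
    moreover have "Suc (n - 1 - Suc i) = n - 1 - i" using Suc.prems by simp
    ultimately show ?case using Suc by simp
  qed
  have "dr p v = (\<Sum>j<n. (-1) ^ (n - 1 - j) * A j)" by (simp add: dr_def A_def n_def)
  also have "\<dots> = (\<Sum>j<n. p v)"
  proof (intro sum.cong refl)
    fix j assume "j \<in> {..<n}"
    then have "A j = (-1) ^ (n - 1 - j) * p v" using Ai[of "n - 1 - j"] by simp
    then show "(-1) ^ (n - 1 - j) * A j = p v" by (simp flip: mult.assoc power_add)
  qed
  finally show ?thesis by (simp add: n_def)
qed

lemma PR_HOM_lie:
  assumes p: "PR d k p" and h: "HOM L p" and L: "1 \<le> L" "L \<le> k"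
  shows "p \<in> lie_alg d k"
proof -
  have "p = (\<lambda>w. (1 / real L) * dyn d k L p w)"
  proof
    fix w
    show "p w = (1 / real L) * dyn d k L p w"
    proof (cases "length w = L")
      case False
      then show ?thesis using h dyn_HOM[of L d k p] by (simp add: HOM_def)
    next
      case True
      show ?thesis
      proof (cases "set w \<subseteq> {..<d}")
        case True
        obtain n where n: "L = Suc n" using L by (cases L) auto
        have "dyn d k L p w = dr p w" using dyn_coeff[of w n k d p] True \<open>length w = L\<close> L n by simp
        also have "\<dots> = real L * p w" using dr_prim[OF p] \<open>length w = L\<close> L by simp
        finally show ?thesis using L by simp
      next
        case False
        have "p w = 0" using p False by (auto simp: PR_def T_def)
        moreover have "dyn d k L p w = 0" using T_lie[OF dyn_lie[of d k L p]] False by (auto simp: T_def)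
        ultimately show ?thesis by simp
      qed
    qed
  qed
  also have "\<dots> \<in> lie_alg d k" by (rule lie_alg.smult[OF dyn_lie])
  finally show ?thesis .
qed

lemma PR_level: assumes "PR d k p" "1 \<le> L" shows "PR d k (level L p)"
proof -
  have "level L p \<in> T d k" using assms by (simp add: PR_def T_level)
  moreover have "level L p [] = 0" using assms by (simp add: level_def)
  moreover have "sh (level L p) u v = 0" if "u \<noteq> []" "v \<noteq> []" "length u + length v \<le> k" for u v
    using assms that by (simp add: sh_level PR_def)
  ultimately show ?thesis by (simp add: PR_def)
qed

lemma HOM_level: "HOM L (level L p)"
  by (simp add: HOM_def level_def)

lemma PR_lie:
  assumes p: "PR d k p"
  shows "p \<in> lie_alg d k"
proof -
  have "p = (\<lambda>w. \<Sum>L\<in>{1..k}. level L p w)"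
  proof
    fix w
    have "(\<Sum>L\<in>{1..k}. level L p w) = (\<Sum>L\<in>{1..k}. if L = length w then p w else 0)"
      by (intro sum.cong) (auto simp: level_def)
    also have "\<dots> = (if 1 \<le> length w \<and> length w \<le> k then p w else 0)" by simp
    also have "\<dots> = p w" using p by (cases "w = []") (auto simp: PR_def T_def Suc_le_eq)
    finally show "p w = (\<Sum>L\<in>{1..k}. level L p w)" by simp
  qed
  also have "\<dots> \<in> lie_alg d k"
  proof (rule lie_sum)
    fix L assume "L \<in> {1..k}"
    then show "level L p \<in> lie_alg d k"
      by (intro PR_HOM_lie[OF PR_level[OF p] HOM_level]) auto
  qed
  finally show ?thesis .
qed

lemma GL_G: assumes "GL d k y" shows "y \<in> G d k"
proof -
  obtain a where a: "PR d k a" "texp k a = y" using GL_exp[OF assms] by blast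
  then show ?thesis using PR_lie[OF a(1)] by (auto simp: G_def)
qed

definition Csum :: "nat \<Rightarrow> nat \<Rightarrow> tensor \<Rightarrow> (nat \<Rightarrow> tensor) \<Rightarrow> tensor" where
  "Csum k N m x = (\<lambda>w. \<Sum>i<N. tlog k (tmult k (tinvk k m) (x i)) w)"

definition stepf :: "nat \<Rightarrow> nat \<Rightarrow> tensor \<Rightarrow> (nat \<Rightarrow> tensor) \<Rightarrow> tensor" where
  "stepf k N m x = tmult k m (texp k (\<lambda>w. (1 / real N) * Csum k N m x w))"

primrec Mit :: "nat \<Rightarrow> nat \<Rightarrow> (nat \<Rightarrow> tensor) \<Rightarrow> nat \<Rightarrow> tensor" where
  "Mit k N x 0 = tone"
| "Mit k N x (Suc t) = stepf k N (Mit k N x t) x"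

lemma tlog_II: "y [] = 1 \<Longrightarrow> II 1 (tlog k y)"
proof -
  assume y: "y [] = 1"
  have b: "II 1 (\<lambda>v. y v - tone v)" using y by (auto simp: II_def tone_def)
  have "II 1 (tpow k (\<lambda>v. y v - tone v) l)" if "l \<in> {1..k}" for l
    using II_mono[OF tpow_II[OF b, of l k]] that by auto
  then show ?thesis unfolding tlog_def by (intro II_sum II_scale) auto
qed

lemma tmult_nil: "tmult k x y [] = x [] * y []"
  by (simp add: tmult_def)

lemma LP:
  assumes y: "y [] = 1" "TK k y" and e: "II n e" "TK k e" and n: "1 \<le> n"
    and g: "II (Suc n) (\<lambda>w. g w - (tone w - e w))"
  shows "II (Suc n) (\<lambda>w. tlog k (tmult k g y) w - tlog k y w + e w)"
proof -
  have eq: "(\<lambda>w. tmult k g y w - (y w - e w)) =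
      (\<lambda>w. tmult k (\<lambda>w. g w - (tone w - e w)) y w - tmult k e (\<lambda>w. y w - tone w) w)"
  proof
    fix w
    have "tmult k (\<lambda>w. g w - (tone w - e w)) y w = tmult k g y w - (y w - tmult k e y w)"
      by (simp add: tmult_diff_left tmult_tone_left[OF y(2)])
    moreover have "tmult k e (\<lambda>w. y w - tone w) w = tmult k e y w - e w"
      by (simp add: tmult_diff_right tmult_tone_right[OF e(2)])
    ultimately show "tmult k g y w - (y w - e w) = tmult k (\<lambda>w. g w - (tone w - e w)) y w - tmult k e (\<lambda>w. y w - tone w) w"
      by simp
  qed
  have yI: "II 1 (\<lambda>w. y w - tone w)" using y by (auto simp: II_def tone_def)
  have "II (Suc n) (\<lambda>w. tmult k g y w - (y w - e w))"
    unfolding eq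
    by (intro II_diff tmult_II_left[OF g]) (use tmult_II[OF e(1) yI] in simp)
  then have c1: "II (Suc n) (\<lambda>w. tlog k (tmult k g y) w - tlog k (\<lambda>v. y v - e v) w)"
    by (rule log_cong)
  have c2: "II (Suc n) (\<lambda>w. tlog k (\<lambda>v. y v - e v) w - tlog k y w + e w)"
    by (rule log_pert[of y n e k, OF y(1) e(1) n e(2)])
  have "II (Suc n) (\<lambda>w. (tlog k (tmult k g y) w - tlog k (\<lambda>v. y v - e v) w) + (tlog k (\<lambda>v. y v - e v) w - tlog k y w + e w))"
    by (rule II_add[OF c1 c2])
  then show ?thesis unfolding II_def by (auto simp: algebra_simps)
qed

lemma LP_sum:
  assumes y: "\<And>i. i < N \<Longrightarrow> y i [] = 1 \<and> TK k (y i)" and e: "II n e" "TK k e" and n: "1 \<le> n"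
    and g: "II (Suc n) (\<lambda>w. g w - (tone w - e w))"
  shows "II (Suc n) (\<lambda>w. (\<Sum>i<N. tlog k (tmult k g (y i)) w) - (\<Sum>i<N. tlog k (y i) w) + real N * e w)"
proof -
  have "II (Suc n) (\<lambda>w. \<Sum>i<N. tlog k (tmult k g (y i)) w - tlog k (y i) w + e w)"
    using LP[OF _ _ e n g] y by (intro II_sum) auto
  then show ?thesis by (simp add: sum.distrib sum_subtractf)
qed

lemma tinvk_prod:
  assumes "TK k a" "a [] = 1" "TK k b" "b [] = 1"
  shows "tinvk k (tmult k a b) = tmult k (tinvk k b) (tinvk k a)"
proof (rule inv_unique[symmetric])
  show "TK k (tmult k (tinvk k b) (tinvk k a))" by simp
  show "TK k (tinvk k (tmult k a b))" by simp
  show "tmult k (tmult k a b) (tinvk k (tmult k a b)) = tone"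
    using assms by (intro tinvk_inv) (auto simp: tmult_nil)
  have "tmult k (tmult k (tinvk k b) (tinvk k a)) (tmult k a b) = tmult k (tinvk k b) (tmult k (tmult k (tinvk k a) a) b)"
    by (simp add: tmult_assoc)
  also have "\<dots> = tone" using assms by (simp add: tinvk_inv tmult_tone_left)
  finally show "tmult k (tmult k (tinvk k b) (tinvk k a)) (tmult k a b) = tone" .
qed

lemma GL_TK: "GL d k y \<Longrightarrow> TK k y" unfolding GL_def by (auto intro: T_TK)
lemma GL_nil: "GL d k y \<Longrightarrow> y [] = 1" by (simp add: GL_def)

lemma exists_step:
  assumes x: "\<And>i. i < N \<Longrightarrow> GL d k (x i)" and N: "1 \<le> N"
  shows "GL d k (Mit k N x t) \<and> II (Suc t) (Csum k N (Mit k N x t) x)"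
proof (induction t)
  case 0
  have "tone [] = 1" by (simp add: tone_def)
  then have "GL d k tone" by (simp add: GL_def sh_tone)
  moreover have "II 1 (Csum k N tone x)"
  proof -
    have t1: "tone [] = 1" by (simp add: tone_def)
    have "tone = tinvk k tone"
      by (rule inv_unique[of k tone "tinvk k tone" tone]) (simp_all add: tinvk_inv(1)[OF tone_TK t1] tmult_tone_left)
    then have "tinvk k tone = tone" by simp
    then have "II 1 (tlog k (tmult k (tinvk k tone) (x i)))" if "i < N" for i
      using x[OF that] by (intro tlog_II) (simp add: tmult_tone_left GL_TK GL_nil)
    then show ?thesis unfolding Csum_def by (intro II_sum) auto
  qed
  ultimately show ?case by simp
next
  case (Suc t)
  define m where "m = Mit k N x t"
  define C where "C = Csum k N m x"
  define c where "c = (\<lambda>w. (1 / real N) * C w)"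
  define y where "y = (\<lambda>i. tmult k (tinvk k m) (x i))"
  have mGL: "GL d k m" and CI: "II (Suc t) C" using Suc by (simp_all add: m_def C_def)
  have yGL: "GL d k (y i)" if "i < N" for i
    unfolding y_def by (intro GL_mult GL_inv mGL x that)
  have cPR: "PR d k c" unfolding c_def C_def Csum_def
    using yGL by (intro PR_scale PR_sum GL_log) (auto simp: y_def)
  have cI: "II (Suc t) c" unfolding c_def by (rule II_scale[OF CI])
  have cT: "TK k c" by (rule PR_TK[OF cPR])
  define h where "h = texp k c"
  have hGL: "GL d k h" unfolding h_def by (rule PR_texp_GL[OF cPR])
  have m': "Mit k N x (Suc t) = tmult k m h" by (simp add: m_def h_def stepf_def c_def C_def)
  have GL': "GL d k (tmult k m h)" by (rule GL_mult[OF mGL hGL])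
  have inv': "tinvk k (tmult k m h) = tmult k (texp k (\<lambda>w. - c w)) (tinvk k m)"
  proof -
    have "tinvk k h = texp k (\<lambda>w. - c w)"
    proof (rule inv_unique[symmetric])
      have ncT: "(\<lambda>w. - c w) \<in> T d k" using T_scale[of c d k "-1"] cPR by (simp add: PR_def)
      show "TK k (texp k (\<lambda>w. - c w))" by (rule T_TK[OF T_texp[OF ncT]])
      show "TK k (tinvk k h)" by simp
      show "tmult k h (tinvk k h) = tone" using hGL by (intro tinvk_inv) (auto simp: GL_TK GL_nil)
      show "tmult k (texp k (\<lambda>w. - c w)) h = tone" unfolding h_def by (rule texp_inv(2)[OF PR_II[OF cPR]])
    qed
    then show ?thesis using tinvk_prod[of k m h] mGL hGL by (simp add: GL_TK GL_nil)
  qed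
  have gI: "II (Suc (Suc t)) (\<lambda>w. texp k (\<lambda>w. - c w) w - (tone w - c w))"
  proof -
    have "II (Suc (Suc t)) (\<lambda>w. texp k (\<lambda>v. (\<lambda>w. 0) v + (\<lambda>w. - c w) v) w - texp k (\<lambda>w. 0) w - (- c w))"
      by (rule exp_pert) (use cI cT in \<open>auto simp: II_def TK_def\<close>)
    then show ?thesis unfolding II_def by (auto simp: texp_zero algebra_simps)
  qed
  have "II (Suc (Suc t)) (\<lambda>w. (\<Sum>i<N. tlog k (tmult k (texp k (\<lambda>w. - c w)) (y i)) w) - (\<Sum>i<N. tlog k (y i) w) + real N * c w)"
    by (rule LP_sum[OF _ cI cT _ gI]) (auto intro: GL_nil GL_TK yGL)
  moreover have "(\<Sum>i<N. tlog k (y i) w) = real N * c w" for w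
    using N by (simp add: c_def C_def Csum_def y_def)
  moreover have "Csum k N (tmult k m h) x = (\<lambda>w. \<Sum>i<N. tlog k (tmult k (texp k (\<lambda>w. - c w)) (y i)) w)"
    unfolding Csum_def inv' y_def by (simp add: tmult_assoc)
  ultimately have "II (Suc (Suc t)) (Csum k N (tmult k m h) x)" by simp
  then show ?case using GL' m' by simp
qed

lemma exists_bary:
  assumes x: "\<And>i. i < N \<Longrightarrow> GL d k (x i)" and N: "1 \<le> N"
  shows "GL d k (Mit k N x k) \<and> Csum k N (Mit k N x k) x = (\<lambda>w. 0)"
proof -
  have h: "GL d k (Mit k N x k)" "II (Suc k) (Csum k N (Mit k N x k) x)" using exists_step[OF x N] by auto
  have "TK k (Csum k N (Mit k N x k) x)" unfolding Csum_def
  proof (intro TK_sum)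
    fix i assume "i \<in> {..<N}"
    then have "tlog k (tmult k (tinvk k (Mit k N x k)) (x i)) \<in> T d k"
      using h(1) x by (intro T_tlog T_tmult T_tinvk) (auto simp: GL_def)
    then show "TK k (tlog k (tmult k (tinvk k (Mit k N x k)) (x i)))" by (rule T_TK)
  qed
  then have "Csum k N (Mit k N x k) x = (\<lambda>w. 0)" using h(2) by (intro II_TK_zero)
  then show ?thesis using h(1) by simp
qed

lemma unique_step:
  assumes x: "\<And>i. i < N \<Longrightarrow> GL d k (x i)" and N: "1 \<le> N"
    and m: "GL d k m" "Csum k N m x = (\<lambda>w. 0)"
    and m': "GL d k m'" "Csum k N m' x = (\<lambda>w. 0)"
    and n: "1 \<le> n" and IH: "II n (\<lambda>w. m' w - m w)"
  shows "II (Suc n) (\<lambda>w. m' w - m w)"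
proof -
  define mi where "mi = tinvk k m"
  define h where "h = tmult k mi m'"
  define e where "e = (\<lambda>w. h w - tone w)"
  define g where "g = tinvk k h"
  have mT: "TK k m" "m [] = 1" using m by (auto intro: GL_TK GL_nil)
  have m'T: "TK k m'" "m' [] = 1" using m' by (auto intro: GL_TK GL_nil)
  have mim: "tmult k mi m = tone" "tmult k m mi = tone" using tinvk_inv[OF mT] by (simp_all add: mi_def)
  have mi0: "mi [] = 1" using arg_cong[OF mim(1), of "\<lambda>f. f []"] mT by (simp add: tmult_nil tone_def)
  have h0: "h [] = 1" using mi0 m'T by (simp add: h_def tmult_nil)
  have hT: "TK k h" by (simp add: h_def)
  have eT: "TK k e" unfolding e_def by (intro TK_diff hT) simp
  have eI: "II n e"
  proof -
    have "e = tmult k mi (\<lambda>w. m' w - m w)" by (simp add: e_def h_def tmult_diff_right mim)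
    then show ?thesis using tmult_II_right[OF IH] by simp
  qed
  have mh: "tmult k m h = m'"
    unfolding h_def by (simp add: tmult_assoc[symmetric] mim tmult_tone_left m'T)
  have hsplit: "h = (\<lambda>w. tone w + e w)" by (simp add: e_def)
  have gh: "tmult k g h = tone" using tinvk_inv(2)[OF hT h0] by (simp add: g_def)
  have g0: "g [] = 1" using arg_cong[OF gh, of "\<lambda>f. f []"] h0 by (simp add: tmult_nil tone_def)
  have gT: "TK k g" by (simp add: g_def)
  have gI: "II (Suc n) (\<lambda>w. g w - (tone w - e w))"
  proof -
    have "tmult k g h = (\<lambda>w. g w + tmult k g e w)"
      by (subst hsplit) (simp add: tmult_add_right tmult_tone_right[OF gT])
    then have ge: "\<And>w. g w + tmult k g e w = tone w" using gh by (metis)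
    have "(\<lambda>w. g w - (tone w - e w)) = (\<lambda>w. - tmult k (\<lambda>w. g w - tone w) e w)"
    proof
      fix w
      show "g w - (tone w - e w) = - tmult k (\<lambda>w. g w - tone w) e w"
        using ge[of w] by (simp add: tmult_diff_left tmult_tone_left[OF eT])
    qed
    moreover have "II (1 + n) (tmult k (\<lambda>w. g w - tone w) e)"
      by (rule tmult_II[OF _ eI]) (use g0 in \<open>auto simp: II_def tone_def\<close>)
    ultimately show ?thesis using II_scale[of "Suc n" _ "-1"] by simp
  qed
  have invm': "tinvk k m' = tmult k g mi"
    using tinvk_prod[OF mT hT h0] mh by (simp add: g_def mi_def)
  define y where "y = (\<lambda>i. tmult k mi (x i))"
  have y: "y i [] = 1 \<and> TK k (y i)" if "i < N" for i
    using x[OF that] mi0 by (auto simp: y_def tmult_nil intro: GL_nil)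
  have L: "II (Suc n) (\<lambda>w. (\<Sum>i<N. tlog k (tmult k g (y i)) w) - (\<Sum>i<N. tlog k (y i) w) + real N * e w)"
    by (rule LP_sum[OF y eI eT n gI])
  have s1: "(\<lambda>w. \<Sum>i<N. tlog k (tmult k g (y i)) w) = (\<lambda>w. 0)"
    using m'(2) by (simp add: Csum_def invm' y_def tmult_assoc)
  have s2: "(\<lambda>w. \<Sum>i<N. tlog k (y i) w) = (\<lambda>w. 0)"
    using m(2) by (simp add: Csum_def y_def mi_def)
  have "II (Suc n) (\<lambda>w. real N * e w)"
    using L s1 s2 by (simp add: II_def fun_eq_iff)
  then have eI': "II (Suc n) e" using N by (auto simp: II_def)
  have "(\<lambda>w. m' w - m w) = tmult k m e"
  proof -
    have "tmult k m h = (\<lambda>w. m w + tmult k m e w)"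
      by (subst hsplit) (simp add: tmult_add_right tmult_tone_right[OF mT(1)])
    then show ?thesis using mh by (auto simp: fun_eq_iff)
  qed
  then show ?thesis using tmult_II_right[OF eI'] by simp
qed

lemma unique_bary:
  assumes x: "\<And>i. i < N \<Longrightarrow> GL d k (x i)" and N: "1 \<le> N"
    and m: "GL d k m" "Csum k N m x = (\<lambda>w. 0)"
    and m': "GL d k m'" "Csum k N m' x = (\<lambda>w. 0)"
  shows "m' = m"
proof -
  have "II (Suc n) (\<lambda>w. m' w - m w)" for n
  proof (induction n)
    case 0
    then show ?case using m(1) m'(1) by (auto simp: II_def GL_def)
  next
    case (Suc n)
    show ?case by (rule unique_step[OF x N m m', of "Suc n"]) (simp_all add: Suc.IH)
  qed
  moreover have "TK k (\<lambda>w. m' w - m w)" using m m' by (intro TK_diff GL_TK)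
  ultimately have "(\<lambda>w. m' w - m w) = (\<lambda>w. 0)" by (intro II_TK_zero) auto
  then show ?thesis by (auto simp: fun_eq_iff)
qed

lemma bary_eq:
  assumes x: "\<And>i. i < N \<Longrightarrow> x i \<in> G d k" and N: "1 \<le> N"
  shows "bary d k N x = Mit k N x k"
proof -
  have xGL: "\<And>i. i < N \<Longrightarrow> GL d k (x i)" using x G_GL by blast
  have E: "GL d k (Mit k N x k)" "Csum k N (Mit k N x k) x = (\<lambda>w. 0)"
    using exists_bary[OF xGL N] by auto
  have tv: "tinv d k m = tinvk k m" if "GL d k m" for m
    using that by (intro tinv_eq) (auto simp: GL_def)
  show ?thesis
    unfolding bary_def
  proof (rule the_equality)
    show "Mit k N x k \<in> G d k \<and> (\<lambda>w. \<Sum>i<N. tlog k (tmult k (tinv d k (Mit k N x k)) (x i)) w) = (\<lambda>w. 0)"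
      using E GL_G[OF E(1)] tv[OF E(1)] by (simp add: Csum_def)
  next
    fix m assume h: "m \<in> G d k \<and> (\<lambda>w. \<Sum>i<N. tlog k (tmult k (tinv d k m) (x i)) w) = (\<lambda>w. 0)"
    then have mGL: "GL d k m" by (auto intro: G_GL)
    then have "Csum k N m x = (\<lambda>w. 0)" using h tv[OF mGL] by (simp add: Csum_def)
    then show "m = Mit k N x k" using unique_bary[OF xGL N E mGL] by simp
  qed
qed

lemma monoeval_Nil[simp]: "monoeval k [] z = tone" by (simp add: monoeval_def)
lemma monoeval_Cons[simp]: "monoeval k ((i, j) # w) z = tmult k (level j (z i)) (monoeval k w z)"
  by (simp add: monoeval_def)
lemma monoeval_TK: "TK k (monoeval k w z)"
  by (cases w) auto
lemma monoeval_append: "monoeval k (u @ v) z = tmult k (monoeval k u z) (monoeval k v z)"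
proof (induction u)
  case Nil then show ?case by (simp add: tmult_tone_left monoeval_TK)
next
  case (Cons p u) then show ?case by (cases p) (simp add: tmult_assoc)
qed

definition ev :: "nat \<Rightarrow> ((nat \<times> nat) list \<times> real) list \<Rightarrow> (nat \<Rightarrow> tensor) \<Rightarrow> tensor" where
  "ev k L x = (\<lambda>u. \<Sum>p\<leftarrow>L. snd p * monoeval k (fst p) x u)"

lemma ev_Nil[simp]: "ev k [] x = (\<lambda>u. 0)" by (simp add: ev_def)
lemma ev_Cons: "ev k (p # L) x = (\<lambda>u. snd p * monoeval k (fst p) x u + ev k L x u)"
  by (simp add: ev_def)
lemma ev_append: "ev k (L1 @ L2) x = (\<lambda>u. ev k L1 x u + ev k L2 x u)"
  by (simp add: ev_def)
lemma ev_scale: "ev k (map (\<lambda>p. (fst p, c * snd p)) L) x = (\<lambda>u. c * ev k L x u)"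
  unfolding ev_def by (rule ext) (simp add: o_def sum_list_const_mult mult.assoc)

lemma tmult_mono_ev: "tmult k (monoeval k w x) (ev k L x) = ev k (map (\<lambda>p. (w @ fst p, snd p)) L) x"
  by (induction L) (simp_all add: ev_Cons tmult_add_right tmult_scale_right monoeval_append)

definition lmul :: "((nat \<times> nat) list \<times> real) list \<Rightarrow> ((nat \<times> nat) list \<times> real) list \<Rightarrow> ((nat \<times> nat) list \<times> real) list" where
  "lmul L1 L2 = concat (map (\<lambda>p. map (\<lambda>q. (fst p @ fst q, snd p * snd q)) L2) L1)"

lemma ev_mult: "tmult k (ev k L1 x) (ev k L2 x) = ev k (lmul L1 L2) x"
proof (induction L1)
  case Nil then show ?case by (simp add: lmul_def)
next
  case (Cons p L1)
  have "tmult k (ev k (p # L1) x) (ev k L2 x) = (\<lambda>u. snd p * tmult k (monoeval k (fst p) x) (ev k L2 x) u + tmult k (ev k L1 x) (ev k L2 x) u)"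
    by (simp add: ev_Cons tmult_add_left tmult_scale_left)
  also have "\<dots> = (\<lambda>u. ev k (map (\<lambda>q. (fst p @ fst q, snd p * snd q)) L2) x u + ev k (lmul L1 L2) x u)"
  proof -
    have "(\<lambda>u. snd p * ev k (map (\<lambda>q. (fst p @ fst q, snd q)) L2) x u) = ev k (map (\<lambda>q. (fst p @ fst q, snd p * snd q)) L2) x"
      using ev_scale[of k "snd p" "map (\<lambda>q. (fst p @ fst q, snd q)) L2" x] by (simp add: o_def)
    then show ?thesis by (simp add: tmult_mono_ev Cons fun_eq_iff)
  qed
  also have "\<dots> = ev k (lmul (p # L1) L2) x"
    by (simp add: lmul_def ev_append)
  finally show ?case .
qed

definition DOMN :: "nat \<Rightarrow> nat \<Rightarrow> (nat \<Rightarrow> tensor) \<Rightarrow> bool" where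
  "DOMN N k x \<longleftrightarrow> (\<forall>i<N. TK k (x i) \<and> x i [] = 1)"

definition OKL :: "nat \<Rightarrow> nat \<Rightarrow> ((nat \<times> nat) list \<times> real) list \<Rightarrow> bool" where
  "OKL N k L \<longleftrightarrow> (\<forall>p\<in>set L. set (fst p) \<subseteq> {..<N} \<times> {1..k})"

definition PF :: "nat \<Rightarrow> nat \<Rightarrow> ((nat \<Rightarrow> tensor) \<Rightarrow> tensor) \<Rightarrow> bool" where
  "PF N k F \<longleftrightarrow> (\<exists>L. OKL N k L \<and> (\<forall>x. DOMN N k x \<longrightarrow> F x = ev k L x))"

lemma PF_add: "PF N k F \<Longrightarrow> PF N k Hf \<Longrightarrow> PF N k (\<lambda>x. (\<lambda>u. F x u + Hf x u))"
  unfolding PF_def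
proof (elim exE conjE)
  fix L1 L2 assume "OKL N k L1" "\<forall>x. DOMN N k x \<longrightarrow> F x = ev k L1 x" "OKL N k L2" "\<forall>x. DOMN N k x \<longrightarrow> Hf x = ev k L2 x"
  then show "\<exists>L. OKL N k L \<and> (\<forall>x. DOMN N k x \<longrightarrow> (\<lambda>u. F x u + Hf x u) = ev k L x)"
    by (intro exI[of _ "L1 @ L2"]) (auto simp: OKL_def ev_append)
qed

lemma PF_scale: "PF N k F \<Longrightarrow> PF N k (\<lambda>x. (\<lambda>u. c * F x u))"
  unfolding PF_def
proof (elim exE conjE)
  fix L assume "OKL N k L" "\<forall>x. DOMN N k x \<longrightarrow> F x = ev k L x"
  then show "\<exists>L. OKL N k L \<and> (\<forall>x. DOMN N k x \<longrightarrow> (\<lambda>u. c * F x u) = ev k L x)"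
    by (intro exI[of _ "map (\<lambda>p. (fst p, c * snd p)) L"]) (auto simp: OKL_def ev_scale)
qed

lemma PF_diff: "PF N k F \<Longrightarrow> PF N k Hf \<Longrightarrow> PF N k (\<lambda>x. (\<lambda>u. F x u - Hf x u))"
  using PF_add[of N k F "\<lambda>x u. (-1) * Hf x u"] PF_scale[of N k Hf "-1"] by simp

lemma PF_zero: "PF N k (\<lambda>x. (\<lambda>u. 0))"
  unfolding PF_def by (intro exI[of _ "[]"]) (auto simp: OKL_def)

lemma PF_sum: "(\<And>a. a \<in> A \<Longrightarrow> PF N k (F a)) \<Longrightarrow> PF N k (\<lambda>x. (\<lambda>u. \<Sum>a\<in>A. F a x u))"
proof (induction A rule: infinite_finite_induct)
  case (infinite A) then show ?case by (simp add: PF_zero)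
next
  case empty then show ?case by (simp add: PF_zero)
next
  case (insert a A)
  then show ?case using PF_add[of N k "F a" "\<lambda>x u. \<Sum>a\<in>A. F a x u"] by simp
qed

lemma PF_mult: "PF N k F \<Longrightarrow> PF N k Hf \<Longrightarrow> PF N k (\<lambda>x. tmult k (F x) (Hf x))"
  unfolding PF_def
proof (elim exE conjE)
  fix L1 L2 assume "OKL N k L1" "\<forall>x. DOMN N k x \<longrightarrow> F x = ev k L1 x" "OKL N k L2" "\<forall>x. DOMN N k x \<longrightarrow> Hf x = ev k L2 x"
  then show "\<exists>L. OKL N k L \<and> (\<forall>x. DOMN N k x \<longrightarrow> tmult k (F x) (Hf x) = ev k L x)"
    by (intro exI[of _ "lmul L1 L2"]) (auto simp: OKL_def ev_mult lmul_def)
qed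

lemma PF_tone: "PF N k (\<lambda>x. tone)"
proof -
  have "ev k [([], 1)] x = tone" for x by (simp add: ev_def)
  then show ?thesis unfolding PF_def by (intro exI[of _ "[([], 1)]"]) (auto simp: OKL_def)
qed

lemma PF_var:
  assumes i: "i < N"
  shows "PF N k (\<lambda>x. x i)"
proof -
  define L where "L = ([], 1::real) # map (\<lambda>j. ([(i, j)], 1::real)) [1..<Suc k]"
  have OK: "OKL N k L" using i by (auto simp: OKL_def L_def)
  have "x i = ev k L x" if "DOMN N k x" for x
  proof
    fix u
    have xT: "TK k (x i)" and x0: "x i [] = 1" using that i by (auto simp: DOMN_def)
    have lT: "TK k (level j (x i))" for j using xT by (auto simp: TK_def level_def)
    have "ev k L x u = tone u + (\<Sum>j\<leftarrow>[1..<Suc k]. level j (x i) u)"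
      by (simp add: L_def ev_def o_def tmult_tone_right[OF lT])
    also have "\<dots> = tone u + (\<Sum>j\<in>{1..k}. level j (x i) u)"
    proof -
      have e: "set [1..<Suc k] = {1..k}" by auto
      show ?thesis using sum_list_distinct_conv_sum_set[of "[1..<Suc k]" "\<lambda>j. level j (x i) u"] e by simp
    qed
    also have "(\<Sum>j\<in>{1..k}. level j (x i) u) = (\<Sum>j\<in>{1..k}. if j = length u then x i u else 0)"
      by (intro sum.cong) (auto simp: level_def)
    also have "tone u + \<dots> = x i u"
      using x0 xT by (cases "u = []") (auto simp: tone_def TK_def Suc_le_eq)
    finally show "x i u = ev k L x u" by simp
  qed
  then show ?thesis using OK unfolding PF_def by blast
qed

lemma PF_tpow: "PF N k F \<Longrightarrow> PF N k (\<lambda>x. tpow k (F x) l)"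
  by (induction l) (simp_all add: PF_tone tpow_Suc PF_mult)

lemma PF_texp: "PF N k F \<Longrightarrow> PF N k (\<lambda>x. texp k (F x))"
  unfolding texp_def divide_inverse
  by (subst mult.commute, intro PF_sum PF_scale PF_tpow)

lemma PF_tlog: "PF N k F \<Longrightarrow> PF N k (\<lambda>x. tlog k (F x))"
  unfolding tlog_def by (intro PF_sum PF_scale PF_tpow PF_diff PF_tone)

lemma PF_tinvk: "PF N k F \<Longrightarrow> PF N k (\<lambda>x. tinvk k (F x))"
  unfolding tinvk_def by (intro PF_sum PF_tpow PF_diff PF_tone)

lemma PF_Mit: "PF N k (\<lambda>x. Mit k N x t)"
proof (induction t)
  case 0 then show ?case by (simp add: PF_tone)
next
  case (Suc t)
  have "PF N k (\<lambda>x. Csum k N (Mit k N x t) x)"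
    unfolding Csum_def by (intro PF_sum PF_tlog PF_mult PF_tinvk Suc PF_var) auto
  then show ?case
    unfolding Mit.simps stepf_def by (intro PF_mult Suc PF_texp PF_scale)
qed

lemma group_sum:
  assumes "finite W" "fst ` set L \<subseteq> W"
  shows "(\<Sum>w\<in>W. (\<Sum>p\<leftarrow>filter (\<lambda>p. fst p = w) L. snd p) * f w) = (\<Sum>p\<leftarrow>L. snd p * (f (fst p) :: real))"
  using assms(2)
proof (induction L)
  case Nil then show ?case by simp
next
  case (Cons p L)
  have "(\<Sum>w\<in>W. (\<Sum>p\<leftarrow>filter (\<lambda>p. fst p = w) (p # L). snd p) * f w)
      = (\<Sum>w\<in>W. (if fst p = w then snd p * f w else 0)) + (\<Sum>w\<in>W. (\<Sum>p\<leftarrow>filter (\<lambda>p. fst p = w) L. snd p) * f w)"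
  proof -
    have "\<And>w. (\<Sum>p\<leftarrow>filter (\<lambda>p. fst p = w) (p # L). snd p) * f w = (if fst p = w then snd p * f w else 0) + (\<Sum>p\<leftarrow>filter (\<lambda>p. fst p = w) L. snd p) * f w"
      by (simp add: algebra_simps)
    then show ?thesis by (simp add: sum.distrib)
  qed
  also have "(\<Sum>w\<in>W. (if fst p = w then snd p * f w else 0)) = snd p * f (fst p)"
    using Cons.prems assms(1) by (simp add: sum.delta)
  finally show ?case using Cons by simp
qed

theorem proposition4p9:
  fixes d k N :: nat
  assumes "1 \<le> N"
  shows "\<exists>q. ncpoly N k q \<and>
           (\<forall>x. (\<forall>i<N. x i \<in> G d k) \<longrightarrow> bary d k N x = ncEval k q x)"
proof -
  obtain L where L: "OKL N k L" "\<And>x. DOMN N k x \<Longrightarrow> Mit k N x k = ev k L x"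
    using PF_Mit[of N k k] unfolding PF_def by blast
  define q where "q = (\<lambda>w. \<Sum>p\<leftarrow>filter (\<lambda>p. fst p = w) L. snd p)"
  define W where "W = fst ` set L"
  have fW: "finite W" by (simp add: W_def)
  have supp: "{w. q w \<noteq> 0} \<subseteq> W"
  proof
    fix w assume "w \<in> {w. q w \<noteq> 0}"
    then have "filter (\<lambda>p. fst p = w) L \<noteq> []" by (auto simp: q_def)
    then show "w \<in> W" unfolding W_def by (metis (mono_tags, lifting) filter_False image_eqI)
  qed
  have ncp: "ncpoly N k q"
    unfolding ncpoly_def
  proof
    show "finite {w. q w \<noteq> 0}" using supp fW by (rule finite_subset)
    show "\<forall>w. q w \<noteq> 0 \<longrightarrow> set w \<subseteq> {..<N} \<times> {1..k}"
      using supp L(1) by (auto simp: W_def OKL_def)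
  qed
  have ev: "ncEval k q x = ev k L x" for x
  proof
    fix u
    have "ncEval k q x u = (\<Sum>w\<in>W. q w * monoeval k w x u)"
      unfolding ncEval_def by (rule sum.mono_neutral_left[OF fW supp]) auto
    also have "\<dots> = ev k L x u"
      unfolding q_def ev_def by (rule group_sum[OF fW]) (simp add: W_def)
    finally show "ncEval k q x u = ev k L x u" .
  qed
  have "bary d k N x = ncEval k q x" if x: "\<forall>i<N. x i \<in> G d k" for x
  proof -
    have "DOMN N k x" unfolding DOMN_def using x G_GL GL_TK GL_nil by blast
    then show ?thesis using bary_eq[of N x d k] x assms L(2) ev by auto
  qed
  then show ?thesis using ncp by blast
qed

end
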